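(* Let $G$ be the automorphism group of $(\mathbb{Q},<)$ and let $f \in G$. Then the following are equivalent: (i) there exist $g, g_1, g_2 \in G$ such that $g$ is a restriction of $f$, $g_1$ is a bump which is an orbital of $g$ (in the group-element sense defined in the context), $g = g_1 g_2$, and $g$ is conjugate in $G$ to $g_2$; (ii) $f$ has infinitely many non-trivial orbitals.
   Context: For $f \in G$, an orbital of $f$ is an equivalence class of $\mathbb{Q}$ under the relation $a \sim b$ iff there are integers $m,n$ with $f^m a \le b \le f^n a$; it is non-trivial if it has more than one point. The support of an element of $G$ is the set of points it moves. A bump is a non-identity element of $G$ with exactly one non-trivial orbital. An element $g$ is a restriction of $f$ if the support of $g$ is contained in that of $f$ and $g$ agrees with $f$ on the support of $g$. An element $g_1$ is an orbital of $g$ if $g_1$ is a bump whose support is contained in that of $g$ and $g_1$ agrees with $g$ on its support. Condition (i) is the meaning in $G$ of the first-order group-theoretic formula ${\bf inf}(x)$ used in the paper. *)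

theory Defs
  imports Complex_Main
begin

definition aut :: "(rat \<Rightarrow> rat) \<Rightarrow> bool" where
  "aut f \<longleftrightarrow> bij f \<and> strict_mono f"

definition ipow :: "(rat \<Rightarrow> rat) \<Rightarrow> int \<Rightarrow> (rat \<Rightarrow> rat)" where
  "ipow f m = (if 0 \<le> m then f ^^ nat m else (inv f) ^^ nat (- m))"

definition orb_rel :: "(rat \<Rightarrow> rat) \<Rightarrow> rat \<Rightarrow> rat \<Rightarrow> bool" where
  "orb_rel f a b \<longleftrightarrow> (\<exists>m n :: int. ipow f m a \<le> b \<and> b \<le> ipow f n a)"

definition orbital_of :: "(rat \<Rightarrow> rat) \<Rightarrow> rat \<Rightarrow> rat set" where
  "orbital_of f a = {b. orb_rel f a b}"

definition nontriv_orbitals :: "(rat \<Rightarrow> rat) \<Rightarrow> rat set set" where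
  "nontriv_orbitals f = {C. (\<exists>a. C = orbital_of f a) \<and> (\<exists>x\<in>C. \<exists>y\<in>C. x \<noteq> y)}"

definition supp :: "(rat \<Rightarrow> rat) \<Rightarrow> rat set" where
  "supp f = {x. f x \<noteq> x}"

definition bump :: "(rat \<Rightarrow> rat) \<Rightarrow> bool" where
  "bump g \<longleftrightarrow> aut g \<and> g \<noteq> id \<and> (\<exists>!C. C \<in> nontriv_orbitals g)"

definition restriction_of :: "(rat \<Rightarrow> rat) \<Rightarrow> (rat \<Rightarrow> rat) \<Rightarrow> bool" where
  "restriction_of g f \<longleftrightarrow> supp g \<subseteq> supp f \<and> (\<forall>x\<in>supp g. g x = f x)"

definition orbital_elt_of :: "(rat \<Rightarrow> rat) \<Rightarrow> (rat \<Rightarrow> rat) \<Rightarrow> bool" where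
  "orbital_elt_of g1 g \<longleftrightarrow> bump g1 \<and> supp g1 \<subseteq> supp g \<and> (\<forall>x\<in>supp g1. g1 x = g x)"

end

theory Submission
  imports Defs "HOL-Library.Countable" "HOL-Library.Infinite_Set"
begin

section \<open>Automorphisms\<close>

lemma aut_bij: "aut f \<Longrightarrow> bij f" by (simp add: aut_def)
lemma aut_smono: "aut f \<Longrightarrow> strict_mono f" by (simp add: aut_def)
lemma aut_less: "aut f \<Longrightarrow> f x < f y \<longleftrightarrow> x < y"
  by (simp add: aut_def strict_mono_less)
lemma aut_le: "aut f \<Longrightarrow> f x \<le> f y \<longleftrightarrow> x \<le> y"
  by (simp add: aut_def strict_mono_less_eq)
lemma aut_eq: "aut f \<Longrightarrow> f x = f y \<longleftrightarrow> x = y"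
  using aut_smono strict_mono_eq by blast
lemma aut_inv_f: "aut f \<Longrightarrow> inv f (f x) = x"
  by (simp add: aut_bij bij_is_inj)
lemma aut_f_inv: "aut f \<Longrightarrow> f (inv f x) = x"
  by (simp add: aut_bij bij_is_surj surj_f_inv_f)

lemma aut_inv: "aut f \<Longrightarrow> aut (inv f)"
proof -
  assume a: "aut f"
  have "bij (inv f)" using a by (simp add: aut_bij bij_imp_bij_inv)
  moreover have "strict_mono (inv f)"
  proof (rule strict_monoI)
    fix x y :: rat assume "x < y"
    then show "inv f x < inv f y" using a aut_less[OF a, of "inv f x" "inv f y"]
      by (simp add: aut_f_inv)
  qed
  ultimately show ?thesis by (simp add: aut_def)
qed

lemma aut_comp: "aut f \<Longrightarrow> aut g \<Longrightarrow> aut (f \<circ> g)"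
  by (simp add: aut_def bij_comp strict_mono_def)

lemma aut_id: "aut id" by (simp add: aut_def strict_mono_def)

lemma smono_surj_aut: "strict_mono f \<Longrightarrow> surj (f::rat\<Rightarrow>rat) \<Longrightarrow> aut f"
  by (simp add: aut_def bij_def strict_mono_imp_inj_on)

section \<open>Integer powers\<close>

lemma ipow_0[simp]: "ipow f 0 = id" by (simp add: ipow_def)

lemma ipow_succ: assumes "aut f" shows "ipow f (m+1) x = f (ipow f m x)"
proof (cases "0 \<le> m")
  case True
  then have "nat (m+1) = Suc (nat m)" by simp
  then show ?thesis using True by (simp add: ipow_def)
next
  case False
  have "\<exists>k. m = - int (Suc k)" using False by (intro exI[of _ "nat (-m-1)"]) simp
  then obtain k where k: "m = - int (Suc k)" by blast
  show ?thesis
  proof (cases k)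
    case 0
    then show ?thesis using k by (simp add: ipow_def aut_f_inv[OF assms])
  next
    case (Suc j)
    have n1: "nat (-(m+1)) = Suc j" "\<not> 0 \<le> m + 1" using k Suc by simp_all
    then have e1: "ipow f (m+1) x = (inv f ^^ Suc j) x" unfolding ipow_def by (simp only: if_False)
    have n2: "nat (-m) = Suc (Suc j)" using k Suc by simp
    have "ipow f m x = (inv f ^^ Suc (Suc j)) x" using False n2 by (simp add: ipow_def del: funpow.simps)
    then have e2: "ipow f m x = inv f ((inv f ^^ Suc j) x)" by (simp only: funpow.simps comp_def)
    show ?thesis using e1 e2 by (simp add: aut_f_inv[OF assms] del: funpow.simps)
  qed
qed

lemma ipow_pred: assumes "aut f" shows "ipow f (m-1) x = inv f (ipow f m x)"
  using ipow_succ[OF assms, of "m-1" x] aut_inv_f[OF assms] by simp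

lemma ipow_add: assumes "aut f" shows "ipow f (m+n) x = ipow f m (ipow f n x)"
proof (induction m rule: int_induct[where k=0])
  case base then show ?case by simp
next
  case (step1 i)
  have "ipow f (i+1+n) x = ipow f ((i+n)+1) x" by (rule arg_cong[where f="\<lambda>k. ipow f k x"]) simp
  also have "\<dots> = f (ipow f (i+n) x)" by (rule ipow_succ[OF assms])
  also have "\<dots> = ipow f (i+1) (ipow f n x)" using step1 ipow_succ[OF assms] by simp
  finally show ?case .
next
  case (step2 i)
  have "ipow f (i-1+n) x = ipow f ((i+n)-1) x" by (rule arg_cong[where f="\<lambda>k. ipow f k x"]) simp
  also have "\<dots> = inv f (ipow f (i+n) x)" by (rule ipow_pred[OF assms])
  also have "\<dots> = ipow f (i-1) (ipow f n x)" using step2 ipow_pred[OF assms] by simp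
  finally show ?case .
qed

lemma ipow_1: "aut f \<Longrightarrow> ipow f 1 x = f x"
  using ipow_succ[of f 0 x] by simp

lemma ipow_m1: "aut f \<Longrightarrow> ipow f (-1) x = inv f x"
  using ipow_pred[of f 0 x] by simp

lemma ipow_neg_cancel: "aut f \<Longrightarrow> ipow f (-m) (ipow f m x) = x"
  using ipow_add[of f "-m" m x] by simp
lemma ipow_cancel_neg: "aut f \<Longrightarrow> ipow f m (ipow f (-m) x) = x"
  using ipow_add[of f m "-m" x] by simp

lemma ipow_smono: assumes "aut f" shows "strict_mono (ipow f m)"
proof (induction m rule: int_induct[where k=0])
  case base then show ?case by (simp add: strict_mono_def)
next
  case (step1 i)
  show ?case
  proof (rule strict_monoI)
    fix x y :: rat assume "x < y"
    then have "ipow f i x < ipow f i y" using step1(2) strict_monoD by blast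
    then have "f (ipow f i x) < f (ipow f i y)" using aut_less[OF assms] by blast
    then show "ipow f (i+1) x < ipow f (i+1) y" by (simp only: ipow_succ[OF assms])
  qed
next
  case (step2 i)
  show ?case
  proof (rule strict_monoI)
    fix x y :: rat assume "x < y"
    then have "ipow f i x < ipow f i y" using step2(2) strict_monoD by blast
    then have "inv f (ipow f i x) < inv f (ipow f i y)" using aut_less[OF aut_inv[OF assms]] by blast
    then show "ipow f (i-1) x < ipow f (i-1) y" by (simp only: ipow_pred[OF assms])
  qed
qed

lemma ipow_less: "aut f \<Longrightarrow> ipow f m x < ipow f m y \<longleftrightarrow> x < y"
  by (simp add: ipow_smono strict_mono_less)
lemma ipow_le: "aut f \<Longrightarrow> ipow f m x \<le> ipow f m y \<longleftrightarrow> x \<le> y"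
  by (simp add: ipow_smono strict_mono_less_eq)
lemma ipow_aut: "aut f \<Longrightarrow> aut (ipow f m)"
proof -
  assume a: "aut f"
  have "surj (ipow f m)" using ipow_cancel_neg[OF a] by (rule surjI)
  then show ?thesis by (simp add: a ipow_smono smono_surj_aut)
qed

lemma ipow_fix: assumes "aut f" "f a = a" shows "ipow f m a = a"
proof (induction m rule: int_induct[where k=0])
  case base then show ?case by simp
next
  case (step1 i) then show ?case by (simp add: ipow_succ[OF assms(1)] assms(2))
next
  case (step2 i)
  have "ipow f (i-1) a = inv f (ipow f i a)" by (rule ipow_pred[OF assms(1)])
  also have "\<dots> = inv f (f a)" using step2(2) assms(2) by simp
  finally show ?case using aut_inv_f[OF assms(1)] by simp
qed

section \<open>Orbitals\<close>

lemma orb_refl: "orb_rel f a a"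
  unfolding orb_rel_def by (rule exI[of _ 0], rule exI[of _ 0]) simp

lemma orb_sym: assumes "aut f" "orb_rel f a b" shows "orb_rel f b a"
proof -
  obtain m n where mn: "ipow f m a \<le> b" "b \<le> ipow f n a" using assms(2) orb_rel_def by blast
  have "ipow f (-n) b \<le> a" using ipow_le[OF assms(1), of "-n" b "ipow f n a"] mn ipow_neg_cancel[OF assms(1)] by simp
  moreover have "a \<le> ipow f (-m) b" using ipow_le[OF assms(1), of "-m" "ipow f m a" b] mn ipow_neg_cancel[OF assms(1)] by simp
  ultimately show ?thesis unfolding orb_rel_def by blast
qed

lemma orb_trans: assumes "aut f" "orb_rel f a b" "orb_rel f b c" shows "orb_rel f a c"
proof -
  obtain m n where mn: "ipow f m a \<le> b" "b \<le> ipow f n a" using assms(2) orb_rel_def by blast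
  obtain p q where pq: "ipow f p b \<le> c" "c \<le> ipow f q b" using assms(3) orb_rel_def by blast
  have "ipow f (p+m) a \<le> c" using pq(1) ipow_le[OF assms(1), of p "ipow f m a" b] mn(1) ipow_add[OF assms(1)] by simp
  moreover have "c \<le> ipow f (q+n) a" using pq(2) ipow_le[OF assms(1), of q b "ipow f n a"] mn(2) ipow_add[OF assms(1)] by simp
  ultimately show ?thesis unfolding orb_rel_def by blast
qed

lemma orb_ipow: "orb_rel f a (ipow f k a)"
  unfolding orb_rel_def by blast

lemma orb_f: "aut f \<Longrightarrow> orb_rel f a (f a)"
  using orb_ipow[of f a 1] ipow_1[of f a] by simp
lemma orb_finv: "aut f \<Longrightarrow> orb_rel f a (inv f a)"
  using orb_ipow[of f a "-1"] ipow_m1[of f a] by simp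

lemma orbital_mem: "b \<in> orbital_of f a \<longleftrightarrow> orb_rel f a b"
  by (simp add: orbital_of_def)

lemma orbital_self: "a \<in> orbital_of f a"
  by (simp add: orbital_mem orb_refl)

lemma orbital_eq: assumes "aut f" "b \<in> orbital_of f a" shows "orbital_of f b = orbital_of f a"
  using assms orb_sym orb_trans unfolding orbital_of_def by blast

lemma orbital_disj: assumes "aut f" "x \<in> orbital_of f a" "x \<in> orbital_of f b"
  shows "orbital_of f a = orbital_of f b"
  using orbital_eq[OF assms(1,2)] orbital_eq[OF assms(1,3)] by simp

lemma orbital_convex: assumes "aut f" "x \<in> orbital_of f a" "z \<in> orbital_of f a" "x \<le> y" "y \<le> z"
  shows "y \<in> orbital_of f a"
proof -
  obtain m where m: "ipow f m a \<le> x" using assms(2) by (auto simp: orbital_mem orb_rel_def)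
  obtain n where n: "z \<le> ipow f n a" using assms(3) by (auto simp: orbital_mem orb_rel_def)
  have "ipow f m a \<le> y" "y \<le> ipow f n a" using m n assms(4,5) by auto
  then show ?thesis unfolding orbital_mem orb_rel_def by blast
qed

lemma orbital_fix: assumes "aut f" "f a = a" shows "orbital_of f a = {a}"
  using ipow_fix[OF assms] by (auto simp: orbital_of_def orb_rel_def)

lemma orbital_f: "aut f \<Longrightarrow> x \<in> orbital_of f a \<Longrightarrow> f x \<in> orbital_of f a"
  using orb_f[of f x] orb_trans[of f a x "f x"] by (simp add: orbital_mem)
lemma orbital_finv: "aut f \<Longrightarrow> x \<in> orbital_of f a \<Longrightarrow> inv f x \<in> orbital_of f a"
  using orb_finv[of f x] orb_trans[of f a x "inv f x"] by (simp add: orbital_mem)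
lemma orbital_ipow: "aut f \<Longrightarrow> x \<in> orbital_of f a \<Longrightarrow> ipow f k x \<in> orbital_of f a"
  using orb_ipow[of f x k] orb_trans[of f a x "ipow f k x"] by (simp add: orbital_mem)

lemma nontriv_mem: "C \<in> nontriv_orbitals f \<longleftrightarrow> (\<exists>a. C = orbital_of f a) \<and> (\<exists>x\<in>C. \<exists>y\<in>C. x \<noteq> y)"
  by (simp add: nontriv_orbitals_def)

lemma nontriv_moved: assumes "aut f" "C \<in> nontriv_orbitals f" "x \<in> C" shows "f x \<noteq> x"
proof
  assume fx: "f x = x"
  obtain a where a: "C = orbital_of f a" using assms(2) nontriv_mem by blast
  have "C = {x}" using orbital_eq[OF assms(1)] assms(3) a orbital_fix[OF assms(1) fx] by simp
  then show False using assms(2) nontriv_mem by auto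
qed

lemma nontriv_eq: assumes "aut f" "C \<in> nontriv_orbitals f" "x \<in> C" shows "C = orbital_of f x"
proof -
  obtain a where "C = orbital_of f a" using assms(2) nontriv_mem by blast
  then show ?thesis using orbital_eq[OF assms(1)] assms(3) by simp
qed

lemma nontriv_of_moved: assumes "aut f" "f x \<noteq> x" shows "orbital_of f x \<in> nontriv_orbitals f"
  unfolding nontriv_mem using assms orbital_self[of x f] orbital_f[OF assms(1) orbital_self[of x f]] by blast

lemma nontriv_convex: assumes "aut f" "C \<in> nontriv_orbitals f" "x \<in> C" "z \<in> C" "x \<le> y" "y \<le> z"
  shows "y \<in> C"
proof -
  obtain a where "C = orbital_of f a" using assms(2) nontriv_mem by blast
  then show ?thesis using orbital_convex[OF assms(1)] assms(3-6) by blast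
qed

lemma nontriv_f: assumes "aut f" "C \<in> nontriv_orbitals f" "x \<in> C" shows "f x \<in> C"
proof -
  obtain a where "C = orbital_of f a" using assms(2) nontriv_mem by blast
  then show ?thesis using orbital_f[OF assms(1)] assms(3) by simp
qed
lemma nontriv_finv: assumes "aut f" "C \<in> nontriv_orbitals f" "x \<in> C" shows "inv f x \<in> C"
proof -
  obtain a where "C = orbital_of f a" using assms(2) nontriv_mem by blast
  then show ?thesis using orbital_finv[OF assms(1)] assms(3) by simp
qed
lemma nontriv_ipow: assumes "aut f" "C \<in> nontriv_orbitals f" "x \<in> C" shows "ipow f k x \<in> C"
proof -
  obtain a where "C = orbital_of f a" using assms(2) nontriv_mem by blast
  then show ?thesis using orbital_ipow[OF assms(1)] assms(3) by simp
qed

lemma nontriv_disj: assumes "aut f" "C \<in> nontriv_orbitals f" "D \<in> nontriv_orbitals f" "x \<in> C" "x \<in> D" shows "C = D"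
  using nontriv_eq[OF assms(1,2,4)] nontriv_eq[OF assms(1,3,5)] by simp


section \<open>Order isomorphisms between subsets of Q\<close>

definition smono_on :: "rat set \<Rightarrow> (rat \<Rightarrow> rat) \<Rightarrow> bool" where
  "smono_on A \<phi> \<longleftrightarrow> (\<forall>x\<in>A. \<forall>y\<in>A. x < y \<longrightarrow> \<phi> x < \<phi> y)"

definition ordiso :: "rat set \<Rightarrow> rat set \<Rightarrow> (rat \<Rightarrow> rat) \<Rightarrow> bool" where
  "ordiso A B \<phi> \<longleftrightarrow> smono_on A \<phi> \<and> \<phi> ` A = B"

definition setlt :: "rat set \<Rightarrow> rat set \<Rightarrow> bool" where
  "setlt A B \<longleftrightarrow> (\<forall>x\<in>A. \<forall>y\<in>B. x < y)"

definition cvx :: "rat set \<Rightarrow> bool" where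
  "cvx A \<longleftrightarrow> (\<forall>x\<in>A. \<forall>z\<in>A. \<forall>y. x \<le> y \<and> y \<le> z \<longrightarrow> y \<in> A)"

lemma ordiso_mono: "ordiso A B \<phi> \<Longrightarrow> x \<in> A \<Longrightarrow> y \<in> A \<Longrightarrow> x < y \<Longrightarrow> \<phi> x < \<phi> y"
  by (simp add: ordiso_def smono_on_def)
lemma ordiso_mono_iff: assumes "ordiso A B \<phi>" "x \<in> A" "y \<in> A" shows "\<phi> x < \<phi> y \<longleftrightarrow> x < y"
proof
  assume h: "\<phi> x < \<phi> y"
  show "x < y"
  proof (rule ccontr)
    assume "\<not> x < y"
    then have "y < x \<or> y = x" by auto
    then show False using ordiso_mono[OF assms(1) assms(3) assms(2)] h by auto
  qed
qed (rule ordiso_mono[OF assms])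
lemma ordiso_in: "ordiso A B \<phi> \<Longrightarrow> x \<in> A \<Longrightarrow> \<phi> x \<in> B"
  by (auto simp add: ordiso_def)
lemma ordiso_onto: "ordiso A B \<phi> \<Longrightarrow> y \<in> B \<Longrightarrow> \<exists>x\<in>A. \<phi> x = y"
  by (auto simp add: ordiso_def)

lemma ordiso_cong: assumes "ordiso A B \<phi>" "\<And>x. x \<in> A \<Longrightarrow> \<psi> x = \<phi> x" shows "ordiso A B \<psi>"
proof -
  have "\<psi> ` A = \<phi> ` A" by (rule image_cong[OF refl assms(2)])
  moreover have "smono_on A \<psi>" using assms unfolding ordiso_def smono_on_def by simp
  ultimately show ?thesis using assms(1) unfolding ordiso_def by simp
qed

lemma ordiso_empty: "ordiso {} {} \<phi>" by (simp add: ordiso_def smono_on_def)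
lemma ordiso_single: "ordiso {a} {b} (\<lambda>_. b)" by (simp add: ordiso_def smono_on_def)

lemma ordiso_glue2:
  assumes "ordiso A1 B1 \<phi>1" "ordiso A2 B2 \<phi>2" "setlt A1 A2" "setlt B1 B2"
  shows "ordiso (A1 \<union> A2) (B1 \<union> B2) (\<lambda>x. if x \<in> A1 then \<phi>1 x else \<phi>2 x)"
proof -
  have d: "x \<in> A2 \<Longrightarrow> x \<notin> A1" for x using assms(3) unfolding setlt_def by blast
  have "smono_on (A1 \<union> A2) (\<lambda>x. if x \<in> A1 then \<phi>1 x else \<phi>2 x)"
    unfolding smono_on_def
  proof (intro ballI impI)
    fix x y assume xy: "x \<in> A1 \<union> A2" "y \<in> A1 \<union> A2" "x < y"
    show "(if x \<in> A1 then \<phi>1 x else \<phi>2 x) < (if y \<in> A1 then \<phi>1 y else \<phi>2 y)"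
    proof (cases "x \<in> A1")
      case True
      then show ?thesis
      proof (cases "y \<in> A1")
        case True
        then show ?thesis using \<open>x \<in> A1\<close> xy ordiso_mono[OF assms(1)] by simp
      next
        case False
        then have "y \<in> A2" using xy by simp
        then show ?thesis using False \<open>x \<in> A1\<close> ordiso_in[OF assms(1)] ordiso_in[OF assms(2)] assms(4)
          unfolding setlt_def by simp
      qed
    next
      case False
      then have x2: "x \<in> A2" using xy by simp
      have "y \<notin> A1" using x2 xy assms(3) unfolding setlt_def by force
      then have "y \<in> A2" using xy by simp
      then show ?thesis using x2 False \<open>y \<notin> A1\<close> xy ordiso_mono[OF assms(2)] by simp
    qed
  qed
  moreover have "(\<lambda>x. if x \<in> A1 then \<phi>1 x else \<phi>2 x) ` (A1 \<union> A2) = B1 \<union> B2"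
  proof -
    have e1: "(\<lambda>x. if x \<in> A1 then \<phi>1 x else \<phi>2 x) ` A1 = B1"
      using assms(1) unfolding ordiso_def by simp
    have e2: "(\<lambda>x. if x \<in> A1 then \<phi>1 x else \<phi>2 x) ` A2 = B2"
    proof -
      have "(\<lambda>x. if x \<in> A1 then \<phi>1 x else \<phi>2 x) ` A2 = \<phi>2 ` A2"
        by (rule image_cong[OF refl]) (simp add: d)
      then show ?thesis using assms(2) unfolding ordiso_def by simp
    qed
    show ?thesis by (simp only: image_Un e1 e2)
  qed
  ultimately show ?thesis unfolding ordiso_def by blast
qed

lemma ordiso_affine:
  fixes a b a' b' :: rat
  assumes "a < b" "a' < b'"
  shows "ordiso {a..<b} {a'..<b'} (\<lambda>x. a' + (x - a) * ((b' - a') / (b - a)))"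
proof -
  define s where "s = (b' - a') / (b - a)"
  have s: "s > 0" using assms by (simp add: s_def)
  have "smono_on {a..<b} (\<lambda>x. a' + (x - a) * s)"
    unfolding smono_on_def using s by (simp add: mult_strict_right_mono)
  moreover have "(\<lambda>x. a' + (x - a) * s) ` {a..<b} = {a'..<b'}"
  proof
    show "(\<lambda>x. a' + (x - a) * s) ` {a..<b} \<subseteq> {a'..<b'}"
    proof
      fix y assume "y \<in> (\<lambda>x. a' + (x - a) * s) ` {a..<b}"
      then obtain x where x: "a \<le> x" "x < b" "y = a' + (x - a) * s" by auto
      have "(x - a) * s < (b - a) * s" using x s by (simp add: mult_strict_right_mono)
      also have "(b - a) * s = b' - a'" using assms by (simp add: s_def)
      finally show "y \<in> {a'..<b'}" using x s by simp
    qed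
  next
    show "{a'..<b'} \<subseteq> (\<lambda>x. a' + (x - a) * s) ` {a..<b}"
    proof
      fix y assume y: "y \<in> {a'..<b'}"
      define x where "x = a + (y - a') / s"
      have "a' + (x - a) * s = y" using s by (simp add: x_def)
      moreover have "a \<le> x" using y s by (simp add: x_def)
      moreover have "x < b"
      proof -
        have "(y - a') / s < (b' - a') / s" using y s by (simp add: divide_strict_right_mono)
        also have "(b' - a') / s = b - a" using assms by (simp add: s_def)
        finally show ?thesis by (simp add: x_def)
      qed
      ultimately show "y \<in> (\<lambda>x. a' + (x - a) * s) ` {a..<b}" by force
    qed
  qed
  ultimately show ?thesis unfolding ordiso_def s_def by simp
qed

section \<open>Chains indexed by the integers\<close>

lemma int_smonoI: fixes c :: "int \<Rightarrow> rat" assumes "\<And>n. c n < c (n+1)" shows "strict_mono c"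
proof (rule strict_monoI)
  fix m n :: int assume "m < n"
  then have "m + 1 \<le> n" by simp
  then show "c m < c n"
  proof (induction n rule: int_ge_induct)
    case base then show ?case using assms by simp
  next
    case (step i) then show ?case using assms[of i] by simp
  qed
qed

definition chainU :: "(int \<Rightarrow> rat) \<Rightarrow> rat set" where
  "chainU c = {x. \<exists>n. c n \<le> x \<and> x < c (n+1)}"

definition chainN :: "(int \<Rightarrow> rat) \<Rightarrow> rat \<Rightarrow> int" where
  "chainN c x = (THE n. c n \<le> x \<and> x < c (n+1))"

lemma chain_uniq: fixes c :: "int \<Rightarrow> rat" assumes "strict_mono c" "c n \<le> x" "x < c (n+1)" "c m \<le> x" "x < c (m+1)"
  shows "m = n"
proof (rule ccontr)
  assume "m \<noteq> n"
  show False
  proof (cases "m < n")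
    case True then have "m + 1 \<le> n" by simp
    then have "c (m+1) \<le> c n" using assms(1) by (simp add: strict_mono_less_eq)
    then show False using assms by simp
  next
    case False then have "n + 1 \<le> m" using \<open>m \<noteq> n\<close> by simp
    then have "c (n+1) \<le> c m" using assms(1) by (simp add: strict_mono_less_eq)
    then show False using assms by simp
  qed
qed

lemma chainN_eq: fixes c :: "int \<Rightarrow> rat" assumes "strict_mono c" "c n \<le> x" "x < c (n+1)" shows "chainN c x = n"
  unfolding chainN_def
proof (rule the_equality)
  show "c n \<le> x \<and> x < c (n+1)" using assms by simp
  fix m assume "c m \<le> x \<and> x < c (m+1)"
  then show "m = n" using chain_uniq[OF assms] by blast
qed

lemma chainN_prop: assumes "strict_mono c" "x \<in> chainU c"
  shows "c (chainN c x) \<le> x" "x < c (chainN c x + 1)"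
proof -
  obtain n where "c n \<le> x" "x < c (n+1)" using assms(2) chainU_def by blast
  then show "c (chainN c x) \<le> x" "x < c (chainN c x + 1)" using chainN_eq[OF assms(1)] by auto
qed

lemma chainU_I: assumes "strict_mono c" "c m \<le> x" "x < c M" shows "x \<in> chainU c"
proof -
  have "m < M"
  proof (rule ccontr)
    assume "\<not> m < M"
    then have "c M \<le> c m" using assms(1) by (simp add: strict_mono_less_eq)
    then show False using assms(2,3) by simp
  qed
  define S where "S = {n. m \<le> n \<and> n < M \<and> c n \<le> x}"
  have fin: "finite S" unfolding S_def by (rule finite_subset[of _ "{m..<M}"]) auto
  have ne: "m \<in> S" using assms \<open>m < M\<close> by (simp add: S_def)
  define n where "n = Max S"
  have nS: "n \<in> S" using fin ne n_def Max_in by blast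
  have "x < c (n+1)"
  proof (cases "n + 1 = M")
    case True then show ?thesis using assms by simp
  next
    case False
    then have "n + 1 < M" using nS S_def by simp
    moreover have "n + 1 \<notin> S" using Max_ge[OF fin] n_def by fastforce
    ultimately show ?thesis using nS unfolding S_def by auto
  qed
  then show ?thesis using nS unfolding chainU_def S_def by blast
qed

lemma chain_glue:
  assumes c: "strict_mono c" and d: "strict_mono d"
    and \<Phi>: "\<And>n. ordiso {c n..<c (n+1)} {d n..<d (n+1)} (\<Phi> n)"
  shows "ordiso (chainU c) (chainU d) (\<lambda>x. \<Phi> (chainN c x) x)"
proof -
  have sm: "smono_on (chainU c) (\<lambda>x. \<Phi> (chainN c x) x)"
    unfolding smono_on_def
  proof (intro ballI impI)
    fix x y assume xy: "x \<in> chainU c" "y \<in> chainU c" "x < y"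
    define n where "n = chainN c x"
    define m where "m = chainN c y"
    have n: "c n \<le> x" "x < c (n+1)" using chainN_prop[OF c xy(1)] n_def by auto
    have m: "c m \<le> y" "y < c (m+1)" using chainN_prop[OF c xy(2)] m_def by auto
    have "n \<le> m"
    proof (rule ccontr)
      assume "\<not> n \<le> m"
      then have "c (m+1) \<le> c n" using c by (simp add: strict_mono_less_eq)
      then show False using n m xy by simp
    qed
    show "\<Phi> (chainN c x) x < \<Phi> (chainN c y) y"
    proof (cases "n = m")
      case True
      then show ?thesis using ordiso_mono[OF \<Phi>[of n]] n m xy n_def m_def by simp
    next
      case False
      then have "n + 1 \<le> m" using \<open>n \<le> m\<close> by simp
      then have "d (n+1) \<le> d m" using d by (simp add: strict_mono_less_eq)
      moreover have "\<Phi> n x < d (n+1)" using ordiso_in[OF \<Phi>[of n]] n by simp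
      moreover have "d m \<le> \<Phi> m y" using ordiso_in[OF \<Phi>[of m]] m by simp
      ultimately show ?thesis using n_def m_def by simp
    qed
  qed
  have im: "(\<lambda>x. \<Phi> (chainN c x) x) ` chainU c = chainU d"
  proof
    show "(\<lambda>x. \<Phi> (chainN c x) x) ` chainU c \<subseteq> chainU d"
    proof
      fix z assume "z \<in> (\<lambda>x. \<Phi> (chainN c x) x) ` chainU c"
      then obtain x where x: "x \<in> chainU c" "z = \<Phi> (chainN c x) x" by blast
      define n where "n = chainN c x"
      have "x \<in> {c n..<c (n+1)}" using chainN_prop[OF c x(1)] n_def by auto
      then have "z \<in> {d n..<d (n+1)}" using ordiso_in[OF \<Phi>[of n]] x(2) n_def by simp
      then show "z \<in> chainU d" unfolding chainU_def by auto
    qed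
  next
    show "chainU d \<subseteq> (\<lambda>x. \<Phi> (chainN c x) x) ` chainU c"
    proof
      fix z assume "z \<in> chainU d"
      then obtain n where "z \<in> {d n..<d (n+1)}" unfolding chainU_def by auto
      then obtain x where x: "x \<in> {c n..<c (n+1)}" "\<Phi> n x = z" using ordiso_onto[OF \<Phi>[of n]] by blast
      have "chainN c x = n" using chainN_eq[OF c] x by simp
      moreover have "x \<in> chainU c" using x unfolding chainU_def by auto
      ultimately show "z \<in> (\<lambda>x. \<Phi> (chainN c x) x) ` chainU c" using x by force
    qed
  qed
  show ?thesis using sm im unfolding ordiso_def by blast
qed

lemma chain_glue_val: fixes c :: "int \<Rightarrow> rat" assumes "strict_mono c" "c n \<le> x" "x < c (n+1)"
  shows "(\<lambda>x. \<Phi> (chainN c x) x) x = \<Phi> n x"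
  using chainN_eq[OF assms] by simp

section \<open>Convex sets without endpoints\<close>

lemma nat_int_plus1[simp]: "nat (1 + int j) = Suc j" "nat (int j + 1) = Suc j" by arith+

definition nomin :: "rat set \<Rightarrow> bool" where "nomin A \<longleftrightarrow> (\<forall>x\<in>A. \<exists>y\<in>A. y < x)"
definition nomax :: "rat set \<Rightarrow> bool" where "nomax A \<longleftrightarrow> (\<forall>x\<in>A. \<exists>y\<in>A. x < y)"

lemma cvx_chain:
  assumes cv: "cvx A" and ne: "a0 \<in> A" and nmi: "nomin A" and nma: "nomax A"
  shows "\<exists>c. strict_mono c \<and> chainU c = A"
proof -
  define e :: "nat \<Rightarrow> rat" where "e = from_nat"
  define nx :: "rat \<Rightarrow> nat \<Rightarrow> rat" where
    "nx = (\<lambda>u n. SOME y. y \<in> A \<and> u < y \<and> (e n \<in> A \<longrightarrow> e n < y))"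
  define pv :: "rat \<Rightarrow> nat \<Rightarrow> rat" where
    "pv = (\<lambda>u n. SOME y. y \<in> A \<and> y < u \<and> (e n \<in> A \<longrightarrow> y < e n))"
  have nx: "nx u n \<in> A \<and> u < nx u n \<and> (e n \<in> A \<longrightarrow> e n < nx u n)" if "u \<in> A" for u n
  proof -
    define z where "z = (if e n \<in> A then max u (e n) else u)"
    have "z \<in> A" using that by (simp add: z_def max_def)
    then obtain y where "y \<in> A" "z < y" using nma nomax_def by blast
    then have "\<exists>y. y \<in> A \<and> u < y \<and> (e n \<in> A \<longrightarrow> e n < y)" by (intro exI[of _ y]) (auto simp: z_def max_def split: if_splits)
    then show ?thesis unfolding nx_def by (rule someI_ex)
  qed
  have pv: "pv u n \<in> A \<and> pv u n < u \<and> (e n \<in> A \<longrightarrow> pv u n < e n)" if "u \<in> A" for u n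
  proof -
    define z where "z = (if e n \<in> A then min u (e n) else u)"
    have "z \<in> A" using that by (simp add: z_def min_def)
    then obtain y where "y \<in> A" "y < z" using nmi nomin_def by blast
    then have "\<exists>y. y \<in> A \<and> y < u \<and> (e n \<in> A \<longrightarrow> y < e n)" by (intro exI[of _ y]) (auto simp: z_def min_def split: if_splits)
    then show ?thesis unfolding pv_def by (rule someI_ex)
  qed
  define up :: "nat \<Rightarrow> rat" where "up = rec_nat a0 (\<lambda>n u. nx u n)"
  define dn :: "nat \<Rightarrow> rat" where "dn = rec_nat a0 (\<lambda>n u. pv u n)"
  have up0: "up 0 = a0" and upS: "up (Suc n) = nx (up n) n" for n by (simp_all add: up_def)
  have dn0: "dn 0 = a0" and dnS: "dn (Suc n) = pv (dn n) n" for n by (simp_all add: dn_def)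
  have upA: "up n \<in> A" for n by (induction n) (simp_all add: up0 upS ne nx)
  have dnA: "dn n \<in> A" for n by (induction n) (simp_all add: dn0 dnS ne pv)
  define c :: "int \<Rightarrow> rat" where "c = (\<lambda>i. if 0 \<le> i then up (nat i) else dn (nat (-i)))"
  have cs: "c i < c (i+1)" for i
  proof (cases "0 \<le> i")
    case True
    then have "nat (i+1) = Suc (nat i)" by simp
    then show ?thesis using True upS nx upA by (simp add: c_def)
  next
    case False
    have "\<exists>k. i = - int (Suc k)" using False by (intro exI[of _ "nat (-i-1)"]) simp
    then obtain k where k: "i = - int (Suc k)" by blast
    have "nat (-i) = Suc k" using k by simp
    moreover have "c (i+1) = dn k"
    proof (cases k)
      case 0 then show ?thesis using k by (simp add: c_def up0 dn0)
    next
      case (Suc j)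
      then have "i + 1 = - int (Suc j)" using k by simp
      then have "c (i+1) = dn (nat (int (Suc j)))" by (simp add: c_def del: of_nat_Suc)
      then show ?thesis using Suc by simp
    qed
    ultimately show ?thesis using False dnS pv dnA by (simp add: c_def)
  qed
  have smc: "strict_mono c" using cs by (rule int_smonoI)
  have cA: "c i \<in> A" for i using upA dnA by (simp add: c_def)
  have "chainU c = A"
  proof
    show "chainU c \<subseteq> A"
    proof
      fix x assume "x \<in> chainU c"
      then obtain n where "c n \<le> x" "x < c (n+1)" unfolding chainU_def by blast
      moreover have "x \<le> c (n+1)" using \<open>x < c (n+1)\<close> by simp
      ultimately show "x \<in> A" using cv cA[of n] cA[of "n+1"] unfolding cvx_def by blast
    qed
  next
    show "A \<subseteq> chainU c"
    proof
      fix x assume xA: "x \<in> A"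
      define n where "n = to_nat x"
      have en: "e n = x" by (simp add: e_def n_def)
      have "x < up (Suc n)" using nx[OF upA[of n], of n] en xA upS by simp
      then have h1: "x < c (int (Suc n))" by (simp add: c_def)
      have "dn (Suc n) < x" using pv[OF dnA[of n], of n] en xA dnS by simp
      then have h2: "c (- int (Suc n)) \<le> x" by (simp add: c_def)
      show "x \<in> chainU c" by (rule chainU_I[OF smc h2 h1])
    qed
  qed
  then show ?thesis using smc by blast
qed

lemma cvx_iso:
  assumes "cvx A" "a \<in> A" "nomin A" "nomax A" "cvx B" "b \<in> B" "nomin B" "nomax B"
  shows "\<exists>\<phi>. ordiso A B \<phi>"
proof -
  obtain c where c: "strict_mono c" "chainU c = A" using cvx_chain assms(1-4) by blast
  obtain d where d: "strict_mono d" "chainU d = B" using cvx_chain assms(5-8) by blast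
  define \<Phi> where "\<Phi> = (\<lambda>n x. d n + (x - c n) * ((d (n+1) - d n) / (c (n+1) - c n)))"
  have "ordiso {c n..<c (n+1)} {d n..<d (n+1)} (\<Phi> n)" for n
    unfolding \<Phi>_def by (rule ordiso_affine) (simp_all add: c(1) d(1) strict_monoD)
  then show ?thesis using chain_glue[OF c(1) d(1)] c(2) d(2) by blast
qed

definition inner :: "rat set \<Rightarrow> rat set" where
  "inner A = {x\<in>A. (\<exists>y\<in>A. y < x) \<and> (\<exists>z\<in>A. x < z)}"
definition mins :: "rat set \<Rightarrow> rat set" where "mins A = {x\<in>A. \<forall>y\<in>A. x \<le> y}"
definition maxs :: "rat set \<Rightarrow> rat set" where "maxs A = {x\<in>A. \<forall>y\<in>A. y \<le> x}"

lemma inner_props: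
  assumes "cvx A"
  shows "cvx (inner A)" "nomin (inner A)" "nomax (inner A)"
    "A = mins A \<union> inner A \<union> maxs A"
proof -
  show "cvx (inner A)" unfolding cvx_def
  proof (intro ballI allI impI)
    fix x z y assume h: "x \<in> inner A" "z \<in> inner A" "x \<le> y \<and> y \<le> z"
    obtain y1 where y1: "y1 \<in> A" "y1 < x" using h(1) inner_def by blast
    obtain z1 where z1: "z1 \<in> A" "z < z1" using h(2) inner_def by blast
    have "x \<in> A" "z \<in> A" using h inner_def by auto
    then have "y \<in> A" using h(3) assms cvx_def by blast
    then show "y \<in> inner A" unfolding inner_def using y1 z1 h(3) by force
  qed
  show "nomin (inner A)" unfolding nomin_def
  proof
    fix x assume "x \<in> inner A"
    then obtain y z where yz: "x \<in> A" "y \<in> A" "y < x" "z \<in> A" "x < z" unfolding inner_def by blast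
    define w where "w = (y + x) / 2"
    have "y < w" "w < x" using yz by (simp_all add: w_def field_simps)
    then have "y \<le> w" "w \<le> x" by simp_all
    then have "w \<in> A" using assms[unfolded cvx_def] yz by blast
    then have "w \<in> inner A" using yz \<open>y < w\<close> \<open>w < x\<close> unfolding inner_def by blast
    then show "\<exists>y\<in>inner A. y < x" using \<open>w < x\<close> by blast
  qed
  show "nomax (inner A)" unfolding nomax_def
  proof
    fix x assume "x \<in> inner A"
    then obtain y z where yz: "x \<in> A" "y \<in> A" "y < x" "z \<in> A" "x < z" unfolding inner_def by blast
    define w where "w = (z + x) / 2"
    have "x < w" "w < z" using yz by (simp_all add: w_def field_simps)
    then have "x \<le> w" "w \<le> z" by simp_all
    then have "w \<in> A" using assms[unfolded cvx_def] yz by blast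
    then have "w \<in> inner A" using yz \<open>x < w\<close> \<open>w < z\<close> unfolding inner_def by blast
    then show "\<exists>y\<in>inner A. x < y" using \<open>x < w\<close> by blast
  qed
  show "A = mins A \<union> inner A \<union> maxs A"
    unfolding mins_def maxs_def inner_def by (auto simp: not_le)
qed

lemma sub_single: "x \<in> mins A \<Longrightarrow> mins A = {x}" "x \<in> maxs A \<Longrightarrow> maxs A = {x}"
  unfolding mins_def maxs_def by (auto intro: order.antisym)

lemma iso_subsingle: assumes "(S = {}) = (T = {})" "\<And>x. x \<in> S \<Longrightarrow> S = {x}" "\<And>x. x \<in> T \<Longrightarrow> T = {x}"
  shows "\<exists>\<phi>. ordiso S T \<phi>"
proof (cases "S = {}")
  case True then show ?thesis using assms ordiso_empty by auto
next
  case False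
  then obtain x y where "x \<in> S" "y \<in> T" using assms(1) by blast
  then have "S = {x}" "T = {y}" using assms(2,3) by auto
  then show ?thesis using ordiso_single by blast
qed

lemma cvx_iso2:
  assumes A: "cvx A" "inner A \<noteq> {}" and B: "cvx B" "inner B \<noteq> {}"
    and mi: "(mins A = {}) = (mins B = {})" and ma: "(maxs A = {}) = (maxs B = {})"
  shows "\<exists>\<phi>. ordiso A B \<phi>"
proof -
  obtain a b where ab: "a \<in> inner A" "b \<in> inner B" using A B by blast
  obtain \<phi>i where i: "ordiso (inner A) (inner B) \<phi>i"
    using cvx_iso[OF inner_props(1)[OF A(1)] ab(1) inner_props(2,3)[OF A(1)]
                     inner_props(1)[OF B(1)] ab(2) inner_props(2,3)[OF B(1)]] by blast
  obtain \<phi>1 where m1: "ordiso (mins A) (mins B) \<phi>1" using iso_subsingle[OF mi] sub_single by blast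
  obtain \<phi>2 where m2: "ordiso (maxs A) (maxs B) \<phi>2" using iso_subsingle[OF ma] sub_single by blast
  have lt1: "setlt (mins X) (inner X)" for X unfolding setlt_def mins_def inner_def by force
  have lt2: "setlt (mins X \<union> inner X) (maxs X)" if ne: "inner X \<noteq> {}" for X
    unfolding setlt_def
  proof (intro ballI)
    fix x y assume xy: "x \<in> mins X \<union> inner X" "y \<in> maxs X"
    obtain w where w: "w \<in> inner X" using ne by blast
    then obtain z where z: "z \<in> X" "w < z" unfolding inner_def by blast
    have wx: "w \<in> X" using w inner_def by blast
    have yx: "w \<le> y" "z \<le> y" using xy(2) wx z unfolding maxs_def by auto
    show "x < y" using xy(1)
    proof
      assume "x \<in> mins X" then have "x \<le> w" using wx mins_def by blast
      then show "x < y" using yx z by simp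
    next
      assume "x \<in> inner X" then obtain u where "u \<in> X" "x < u" unfolding inner_def by blast
      then show "x < y" using xy(2) maxs_def by force
    qed
  qed
  have "\<exists>\<phi>. ordiso (mins A \<union> inner A) (mins B \<union> inner B) \<phi>"
    using ordiso_glue2[OF m1 i lt1 lt1] by blast
  then obtain \<phi>3 where "ordiso (mins A \<union> inner A) (mins B \<union> inner B) \<phi>3" by blast
  note g = ordiso_glue2[OF this m2 lt2[OF A(2)] lt2[OF B(2)]]
  have "A = mins A \<union> inner A \<union> maxs A" "B = mins B \<union> inner B \<union> maxs B"
    using inner_props(4)[OF A(1)] inner_props(4)[OF B(1)] by auto
  then show ?thesis using g by (metis (no_types, lifting))
qed


lemma ordiso_comp: "ordiso A B \<phi> \<Longrightarrow> ordiso B D \<psi> \<Longrightarrow> ordiso A D (\<lambda>x. \<psi> (\<phi> x))"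
  unfolding ordiso_def smono_on_def by (auto simp: image_image[symmetric])

lemma ordiso_ipow: assumes "aut f"
  shows "ordiso {a..<b} {ipow f k a..<ipow f k b} (ipow f k)"
proof -
  have "smono_on {a..<b} (ipow f k)" unfolding smono_on_def using ipow_less[OF assms] by blast
  moreover have "ipow f k ` {a..<b} = {ipow f k a..<ipow f k b}"
  proof
    show "ipow f k ` {a..<b} \<subseteq> {ipow f k a..<ipow f k b}"
      using ipow_less[OF assms] ipow_le[OF assms] by auto
  next
    show "{ipow f k a..<ipow f k b} \<subseteq> ipow f k ` {a..<b}"
    proof
      fix y assume y: "y \<in> {ipow f k a..<ipow f k b}"
      define x where "x = ipow f (-k) y"
      have yx: "y = ipow f k x" by (simp add: x_def ipow_cancel_neg[OF assms])
      then have "x \<in> {a..<b}" using y ipow_less[OF assms] ipow_le[OF assms] by auto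
      then show "y \<in> ipow f k ` {a..<b}" using yx by blast
    qed
  qed
  ultimately show ?thesis unfolding ordiso_def by blast
qed

lemma orbit_chain:
  assumes f: "aut f" and C: "C \<in> nontriv_orbitals f" and x0: "x0 \<in> C" "x0 < f x0"
  shows "strict_mono (\<lambda>n. ipow f n x0)" "chainU (\<lambda>n. ipow f n x0) = C"
proof -
  define c where "c = (\<lambda>n. ipow f n x0)"
  have cs: "c (n+1) = f (c n)" for n unfolding c_def by (rule ipow_succ[OF f])
  have "c n < c (n+1)" for n
  proof -
    have "c n < ipow f n (f x0)" unfolding c_def using ipow_less[OF f] x0(2) by blast
    also have "ipow f n (f x0) = c (n+1)" unfolding c_def using ipow_add[OF f, of n 1 x0] ipow_1[OF f] by simp
    finally show ?thesis .
  qed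
  then have sm: "strict_mono c" by (rule int_smonoI)
  then show "strict_mono (\<lambda>n. ipow f n x0)" unfolding c_def .
  have "chainU c = C"
  proof
    show "chainU c \<subseteq> C"
    proof
      fix x assume "x \<in> chainU c"
      then obtain n where n: "c n \<le> x" "x < c (n+1)" unfolding chainU_def by blast
      have cm: "c n \<in> C" "c (n+1) \<in> C" using nontriv_ipow[OF f C x0(1)] c_def by auto
      show "x \<in> C" using nontriv_convex[OF f C cm(1) cm(2) n(1)] n(2) by simp
    qed
  next
    show "C \<subseteq> chainU c"
    proof
      fix x assume "x \<in> C"
      then have "x \<in> orbital_of f x0" using nontriv_eq[OF f C x0(1)] by simp
      then obtain m M where "c m \<le> x" "x \<le> c M" unfolding orbital_mem orb_rel_def c_def by blast
      moreover have "c M < c (M+1)" using sm by (simp add: strict_mono_less)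
      ultimately have "c m \<le> x" "x < c (M+1)" by simp_all
      then show "x \<in> chainU c" by (rule chainU_I[OF sm])
    qed
  qed
  then show "chainU (\<lambda>n. ipow f n x0) = C" unfolding c_def .
qed

lemma up_all: assumes f: "aut f" and C: "C \<in> nontriv_orbitals f" and x0: "x0 \<in> C" "x0 < f x0"
  and x: "x \<in> C" shows "x < f x"
proof -
  note oc = orbit_chain[OF assms(1-4)]
  define n where "n = chainN (\<lambda>n. ipow f n x0) x"
  have n: "ipow f n x0 \<le> x" "x < ipow f (n+1) x0" using chainN_prop[OF oc(1)] oc(2) x n_def by auto
  have "ipow f (n+1) x0 = f (ipow f n x0)" by (rule ipow_succ[OF f])
  also have "\<dots> \<le> f x" using n(1) aut_le[OF f] by blast
  finally show ?thesis using n(2) by simp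
qed

lemma inv_inv_aut: "aut f \<Longrightarrow> inv (inv f) = f"
  by (simp add: aut_bij inv_inv_eq)

lemma ipow_inv: assumes f: "aut f" shows "ipow (inv f) m x = ipow f (-m) x"
proof (induction m rule: int_induct[where k=0])
  case base then show ?case by simp
next
  case (step1 i)
  have "ipow (inv f) (i+1) x = inv f (ipow (inv f) i x)" by (rule ipow_succ[OF aut_inv[OF f]])
  also have "\<dots> = inv f (ipow f (-i) x)" using step1 by simp
  also have "\<dots> = ipow f (-i - 1) x" by (rule ipow_pred[OF f, symmetric])
  finally show ?case by simp
next
  case (step2 i)
  have "ipow (inv f) (i-1) x = inv (inv f) (ipow (inv f) i x)" by (rule ipow_pred[OF aut_inv[OF f]])
  also have "\<dots> = f (ipow f (-i) x)" using step2 inv_inv_aut[OF f] by simp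
  also have "\<dots> = ipow f (-i + 1) x" by (rule ipow_succ[OF f, symmetric])
  finally show ?case by simp
qed

lemma orb_rel_inv: assumes f: "aut f" shows "orb_rel (inv f) a b \<longleftrightarrow> orb_rel f a b"
proof
  assume "orb_rel (inv f) a b"
  then obtain m n where "ipow (inv f) m a \<le> b" "b \<le> ipow (inv f) n a" unfolding orb_rel_def by blast
  then show "orb_rel f a b" unfolding orb_rel_def ipow_inv[OF f] by blast
next
  assume "orb_rel f a b"
  then obtain m n where "ipow f m a \<le> b" "b \<le> ipow f n a" unfolding orb_rel_def by blast
  then have "ipow (inv f) (-m) a \<le> b" "b \<le> ipow (inv f) (-n) a" unfolding ipow_inv[OF f] by simp_all
  then show "orb_rel (inv f) a b" unfolding orb_rel_def by blast
qed

lemma orbital_inv: assumes "aut f" shows "orbital_of (inv f) a = orbital_of f a"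
  unfolding orbital_of_def using orb_rel_inv[OF assms] by blast

lemma nontriv_inv: assumes "aut f" shows "nontriv_orbitals (inv f) = nontriv_orbitals f"
  unfolding nontriv_orbitals_def using orbital_inv[OF assms] by simp

lemma dir_cases: assumes f: "aut f" and C: "C \<in> nontriv_orbitals f"
  shows "(\<forall>x\<in>C. x < f x) \<or> (\<forall>x\<in>C. f x < x)"
proof -
  obtain x0 where x0: "x0 \<in> C" using C nontriv_mem by blast
  have "f x0 \<noteq> x0" using nontriv_moved[OF f C x0] .
  then consider "x0 < f x0" | "f x0 < x0" by linarith
  then show ?thesis
  proof cases
    case 1 then show ?thesis using up_all[OF f C x0] by blast
  next
    case 2
    have C': "C \<in> nontriv_orbitals (inv f)" using C nontriv_inv[OF f] by simp
    have "x0 < inv f x0" using 2 aut_less[OF f, of x0 "inv f x0"] aut_f_inv[OF f] by simp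
    then have "\<forall>x\<in>C. x < inv f x" using up_all[OF aut_inv[OF f] C' x0] by blast
    then have "\<forall>x\<in>C. f x < x" using aut_less[OF f] aut_f_inv[OF f] by metis
    then show ?thesis by blast
  qed
qed

lemma bump_conj_up:
  assumes f: "aut f" and C: "C \<in> nontriv_orbitals f" and C': "C' \<in> nontriv_orbitals f"
    and x0: "x0 \<in> C" "x0 < f x0" and y0: "y0 \<in> C'" "y0 < f y0"
  shows "\<exists>\<psi>. ordiso C C' \<psi> \<and> (\<forall>x\<in>C. \<psi> (f x) = f (\<psi> x))"
proof -
  define c where "c = (\<lambda>n. ipow f n x0)"
  define d where "d = (\<lambda>n. ipow f n y0)"
  note oc = orbit_chain[OF f C x0, folded c_def]
  note od = orbit_chain[OF f C' y0, folded d_def]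
  define \<phi> where "\<phi> = (\<lambda>x. y0 + (x - x0) * ((f y0 - y0) / (f x0 - x0)))"
  have \<phi>: "ordiso {x0..<f x0} {y0..<f y0} \<phi>" unfolding \<phi>_def by (rule ordiso_affine) (use x0 y0 in auto)
  define \<Phi> where "\<Phi> = (\<lambda>n x. ipow f n (\<phi> (ipow f (-n) x)))"
  have cn: "ipow f (-n) (c n) = x0" "ipow f (-n) (c (n+1)) = f x0" for n
    unfolding c_def using ipow_neg_cancel[OF f] ipow_add[OF f, of "-n" "n+1" x0] ipow_1[OF f] by simp_all
  have dn: "ipow f n y0 = d n" "ipow f n (f y0) = d (n+1)" for n
    unfolding d_def using ipow_add[OF f, of n 1 y0] ipow_1[OF f] by simp_all
  have \<Phi>iso: "ordiso {c n..<c (n+1)} {d n..<d (n+1)} (\<Phi> n)" for n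
  proof -
    have "ordiso {c n..<c (n+1)} {x0..<f x0} (ipow f (-n))" using ordiso_ipow[OF f, of "c n" "c (n+1)" "-n"] cn by simp
    moreover have "ordiso {y0..<f y0} {d n..<d (n+1)} (ipow f n)" using ordiso_ipow[OF f, of y0 "f y0" n] dn by simp
    ultimately show ?thesis unfolding \<Phi>_def using ordiso_comp[OF ordiso_comp[OF _ \<phi>]] by blast
  qed
  define \<psi> where "\<psi> = (\<lambda>x. \<Phi> (chainN c x) x)"
  have iso: "ordiso C C' \<psi>" using chain_glue[OF oc(1) od(1) \<Phi>iso] oc(2) od(2) unfolding \<psi>_def by simp
  have comm: "\<psi> (f x) = f (\<psi> x)" if x: "x \<in> C" for x
  proof -
    define n where "n = chainN c x"
    have n: "c n \<le> x" "x < c (n+1)" using chainN_prop[OF oc(1)] oc(2) x n_def by auto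
    have cs: "c (m+1) = f (c m)" for m unfolding c_def by (rule ipow_succ[OF f])
    have "c (n+1) \<le> f x" using n cs aut_le[OF f] by simp
    moreover have "f x < c (n+1+1)" using n(2) cs[of "n+1"] aut_less[OF f] by simp
    ultimately have "c (n+1) \<le> f x" "f x < c (n+1+1)" by simp_all
    then have "\<psi> (f x) = \<Phi> (n+1) (f x)" unfolding \<psi>_def using chain_glue_val[OF oc(1)] by blast
    also have "\<dots> = ipow f (n+1) (\<phi> (ipow f (-(n+1)) (f x)))" by (simp add: \<Phi>_def)
    also have "ipow f (-(n+1)) (f x) = ipow f (-n) x"
      using ipow_add[OF f, of "-(n+1)" 1 x] ipow_1[OF f] by simp
    also have "ipow f (n+1) (\<phi> (ipow f (-n) x)) = f (\<Phi> n x)" by (simp add: \<Phi>_def ipow_succ[OF f])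
    also have "\<Phi> n x = \<psi> x" unfolding \<psi>_def n_def by simp
    finally show ?thesis .
  qed
  show ?thesis using iso comm by blast
qed

lemma bump_conj:
  assumes f: "aut f" and C: "C \<in> nontriv_orbitals f" and C': "C' \<in> nontriv_orbitals f"
    and dir: "(\<forall>x\<in>C. x < f x) = (\<forall>x\<in>C'. x < f x)"
  shows "\<exists>\<psi>. ordiso C C' \<psi> \<and> (\<forall>x\<in>C. \<psi> (f x) = f (\<psi> x))"
proof -
  obtain x0 where x0: "x0 \<in> C" using C nontriv_mem by blast
  obtain y0 where y0: "y0 \<in> C'" using C' nontriv_mem by blast
  show ?thesis
  proof (cases "\<forall>x\<in>C. x < f x")
    case True
    then show ?thesis using bump_conj_up[OF f C C' x0 _ y0] x0 y0 dir by blast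
  next
    case False
    then have dC: "\<forall>x\<in>C. f x < x" using dir_cases[OF f C] by blast
    have dC': "\<forall>x\<in>C'. f x < x" using False dir dir_cases[OF f C'] by blast
    have up: "x < inv f x" if "f x < x" for x using that aut_less[OF f, of x "inv f x"] aut_f_inv[OF f] by simp
    have Ci: "C \<in> nontriv_orbitals (inv f)" "C' \<in> nontriv_orbitals (inv f)" using C C' nontriv_inv[OF f] by simp_all
    obtain \<psi> where \<psi>: "ordiso C C' \<psi>" "\<forall>x\<in>C. \<psi> (inv f x) = inv f (\<psi> x)"
      using bump_conj_up[OF aut_inv[OF f] Ci x0 up y0 up] dC dC' x0 y0 by blast
    have "\<psi> (f x) = f (\<psi> x)" if x: "x \<in> C" for x
    proof -
      have "f x \<in> C" using nontriv_f[OF f C x] .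
      then have "\<psi> (inv f (f x)) = inv f (\<psi> (f x))" using \<psi>(2) by blast
      then have "\<psi> x = inv f (\<psi> (f x))" using aut_inv_f[OF f] by simp
      then show ?thesis using aut_f_inv[OF f] by metis
    qed
    then show ?thesis using \<psi>(1) by blast
  qed
qed


section \<open>Restrictions to unions of orbitals\<close>

definition rst :: "(rat \<Rightarrow> rat) \<Rightarrow> rat set \<Rightarrow> rat \<Rightarrow> rat" where
  "rst f U = (\<lambda>x. if x \<in> U then f x else x)"

definition oclosed :: "(rat \<Rightarrow> rat) \<Rightarrow> rat set \<Rightarrow> bool" where
  "oclosed f U \<longleftrightarrow> (\<forall>x\<in>U. orbital_of f x \<subseteq> U)"

lemma oclosed_f: "aut f \<Longrightarrow> oclosed f U \<Longrightarrow> x \<in> U \<Longrightarrow> f x \<in> U"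
  unfolding oclosed_def using orbital_f orbital_self by blast
lemma oclosed_finv: "aut f \<Longrightarrow> oclosed f U \<Longrightarrow> x \<in> U \<Longrightarrow> inv f x \<in> U"
  unfolding oclosed_def using orbital_finv orbital_self by blast
lemma oclosed_ipow: "aut f \<Longrightarrow> oclosed f U \<Longrightarrow> x \<in> U \<Longrightarrow> ipow f k x \<in> U"
  unfolding oclosed_def using orbital_ipow orbital_self by blast

lemma oclosed_union: assumes f: "aut f" and S: "S \<subseteq> nontriv_orbitals f" shows "oclosed f (\<Union>S)"
  unfolding oclosed_def
proof
  fix x assume "x \<in> \<Union>S"
  then obtain D where D: "D \<in> S" "x \<in> D" by blast
  then have "orbital_of f x = D" using nontriv_eq[OF f] S by blast
  then show "orbital_of f x \<subseteq> \<Union>S" using D by blast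
qed

lemma rst_aut: assumes f: "aut f" and U: "oclosed f U" shows "aut (rst f U)"
proof -
  have sm: "strict_mono (rst f U)"
  proof (rule strict_monoI)
    fix x y :: rat assume xy: "x < y"
    show "rst f U x < rst f U y"
    proof (cases "x \<in> U")
      case xU: True
      show ?thesis
      proof (cases "y \<in> U")
        case True then show ?thesis using xU xy aut_less[OF f] by (simp add: rst_def)
      next
        case False
        have "f x < y"
        proof (rule ccontr)
          assume "\<not> f x < y"
          then have "y \<in> orbital_of f x"
            using orbital_convex[OF f orbital_self orbital_f[OF f orbital_self], of x y] xy by simp
          then show False using False U xU unfolding oclosed_def by blast
        qed
        then show ?thesis using xU False by (simp add: rst_def)
      qed
    next
      case xU: False
      show ?thesis
      proof (cases "y \<in> U")
        case True
        have "x < f y"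
        proof (rule ccontr)
          assume "\<not> x < f y"
          then have "x \<in> orbital_of f y"
            using orbital_convex[OF f orbital_f[OF f orbital_self] orbital_self, of y x] xy by simp
          then show False using True U xU unfolding oclosed_def by blast
        qed
        then show ?thesis using xU True by (simp add: rst_def)
      next
        case False then show ?thesis using xU xy by (simp add: rst_def)
      qed
    qed
  qed
  have "surj (rst f U)"
  proof (rule surjI)
    fix y
    show "rst f U (if y \<in> U then inv f y else y) = y"
      using oclosed_finv[OF f U] aut_f_inv[OF f] by (simp add: rst_def)
  qed
  then show ?thesis using sm smono_surj_aut by blast
qed

lemma rst_in: "x \<in> U \<Longrightarrow> rst f U x = f x" and rst_out: "x \<notin> U \<Longrightarrow> rst f U x = x"
  by (simp_all add: rst_def)

lemma rst_inv: assumes f: "aut f" and U: "oclosed f U" and z: "z \<in> U" shows "inv (rst f U) z = inv f z"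
proof -
  have "rst f U (inv f z) = z" using oclosed_finv[OF f U z] aut_f_inv[OF f] by (simp add: rst_def)
  then show ?thesis using aut_inv_f[OF rst_aut[OF f U], of "inv f z"] by simp
qed

lemma rst_ipow_in: assumes f: "aut f" and U: "oclosed f U" and x: "x \<in> U"
  shows "ipow (rst f U) m x = ipow f m x"
proof (induction m rule: int_induct[where k=0])
  case base then show ?case by simp
next
  case (step1 i)
  have "ipow (rst f U) (i+1) x = rst f U (ipow f i x)" using step1 ipow_succ[OF rst_aut[OF f U]] by simp
  also have "\<dots> = f (ipow f i x)" using oclosed_ipow[OF f U x] by (simp add: rst_def)
  finally show ?case using ipow_succ[OF f] by simp
next
  case (step2 i)
  have "ipow (rst f U) (i-1) x = inv (rst f U) (ipow f i x)" using step2 ipow_pred[OF rst_aut[OF f U]] by simp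
  also have "\<dots> = inv f (ipow f i x)" using rst_inv[OF f U oclosed_ipow[OF f U x]] by simp
  finally show ?case using ipow_pred[OF f] by simp
qed

lemma rst_orbital_in: assumes f: "aut f" and U: "oclosed f U" and x: "x \<in> U"
  shows "orbital_of (rst f U) x = orbital_of f x"
  unfolding orbital_of_def orb_rel_def using rst_ipow_in[OF f U x] by simp

lemma rst_orbital_out: assumes f: "aut f" and U: "oclosed f U" and x: "x \<notin> U"
  shows "orbital_of (rst f U) x = {x}"
  using orbital_fix[OF rst_aut[OF f U]] x by (simp add: rst_def)

lemma rst_nontriv: assumes f: "aut f" and U: "oclosed f U"
  shows "nontriv_orbitals (rst f U) = {D \<in> nontriv_orbitals f. D \<subseteq> U}"
proof
  show "nontriv_orbitals (rst f U) \<subseteq> {D \<in> nontriv_orbitals f. D \<subseteq> U}"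
  proof
    fix D assume D: "D \<in> nontriv_orbitals (rst f U)"
    obtain a where a: "D = orbital_of (rst f U) a" using D unfolding nontriv_mem by blast
    have two: "\<exists>x\<in>D. \<exists>y\<in>D. x \<noteq> y" using D unfolding nontriv_mem by blast
    have aU: "a \<in> U"
    proof (rule ccontr)
      assume "a \<notin> U" then have "D = {a}" using a rst_orbital_out[OF f U] by simp
      then show False using two by blast
    qed
    have Da: "D = orbital_of f a" using a rst_orbital_in[OF f U aU] by simp
    then have "D \<in> nontriv_orbitals f" using two unfolding nontriv_mem by blast
    moreover have "D \<subseteq> U" using Da aU U unfolding oclosed_def by simp
    ultimately show "D \<in> {D \<in> nontriv_orbitals f. D \<subseteq> U}" by simp
  qed
next
  show "{D \<in> nontriv_orbitals f. D \<subseteq> U} \<subseteq> nontriv_orbitals (rst f U)"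
  proof
    fix D assume D: "D \<in> {D \<in> nontriv_orbitals f. D \<subseteq> U}"
    then have D1: "D \<in> nontriv_orbitals f" and D2: "D \<subseteq> U" by simp_all
    obtain a where a: "D = orbital_of f a" using D1 unfolding nontriv_mem by blast
    have two: "\<exists>x\<in>D. \<exists>y\<in>D. x \<noteq> y" using D1 unfolding nontriv_mem by blast
    have "a \<in> D" using a orbital_self by simp
    then have "a \<in> U" using D2 by blast
    then have "D = orbital_of (rst f U) a" using a rst_orbital_in[OF f U] by simp
    then show "D \<in> nontriv_orbitals (rst f U)" using two unfolding nontriv_mem by blast
  qed
qed

definition lbt :: "rat set \<Rightarrow> bool" where
  "lbt C \<longleftrightarrow> (\<exists>m. (\<forall>y\<in>C. m < y) \<and> (\<forall>x. (\<forall>y\<in>C. x < y) \<longrightarrow> x \<le> m))"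
definition ubt :: "rat set \<Rightarrow> bool" where
  "ubt C \<longleftrightarrow> (\<exists>m. (\<forall>y\<in>C. y < m) \<and> (\<forall>x. (\<forall>y\<in>C. y < x) \<longrightarrow> m \<le> x))"

definition pieceL :: "rat \<Rightarrow> rat set \<Rightarrow> rat set" where
  "pieceL a C = {x. a \<le> x \<and> (\<forall>y\<in>C. x < y)}"
definition pieceR :: "rat set \<Rightarrow> rat \<Rightarrow> rat set" where
  "pieceR C b = {x. (\<forall>y\<in>C. y < x) \<and> x < b}"

lemma pieceL_props:
  assumes a: "\<forall>y\<in>C. a < y" and hL: "a < y0" "\<forall>z\<in>C. y0 < z"
  shows "cvx (pieceL a C)" "inner (pieceL a C) \<noteq> {}" "mins (pieceL a C) \<noteq> {}"
    "(maxs (pieceL a C) = {}) = (\<not> lbt C)"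
proof -
  show "cvx (pieceL a C)" unfolding cvx_def pieceL_def
  proof (intro ballI allI impI)
    fix x z y assume h: "x \<in> {x. a \<le> x \<and> (\<forall>y\<in>C. x < y)}" "z \<in> {x. a \<le> x \<and> (\<forall>y\<in>C. x < y)}" "x \<le> y \<and> y \<le> z"
    have "a \<le> y" using h by simp
    moreover have "\<forall>w\<in>C. y < w" using h by fastforce
    ultimately show "y \<in> {x. a \<le> x \<and> (\<forall>y\<in>C. x < y)}" by simp
  qed
  have "a \<in> pieceL a C" "y0 \<in> pieceL a C" using a hL by (auto simp: pieceL_def)
  moreover have "(a + y0) / 2 \<in> pieceL a C" using hL by (auto simp: pieceL_def field_simps)
  moreover have "a < (a + y0) / 2" "(a + y0) / 2 < y0" using hL by (simp_all add: field_simps)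
  ultimately show "inner (pieceL a C) \<noteq> {}" unfolding inner_def by blast
  have "a \<in> mins (pieceL a C)" using a by (auto simp: mins_def pieceL_def)
  then show "mins (pieceL a C) \<noteq> {}" by blast
  show "(maxs (pieceL a C) = {}) = (\<not> lbt C)"
  proof
    assume e: "maxs (pieceL a C) = {}"
    show "\<not> lbt C"
    proof
      assume "lbt C"
      then obtain m where m: "\<forall>y\<in>C. m < y" "\<forall>x. (\<forall>y\<in>C. x < y) \<longrightarrow> x \<le> m" unfolding lbt_def by blast
      have "a \<le> m" using m a by blast
      then have "m \<in> maxs (pieceL a C)" using m by (auto simp: maxs_def pieceL_def)
      then show False using e by blast
    qed
  next
    assume n: "\<not> lbt C"
    show "maxs (pieceL a C) = {}"
    proof (rule ccontr)
      assume "maxs (pieceL a C) \<noteq> {}"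
      then obtain m where m: "m \<in> pieceL a C" "\<forall>y\<in>pieceL a C. y \<le> m" unfolding maxs_def by blast
      have "\<forall>x. (\<forall>y\<in>C. x < y) \<longrightarrow> x \<le> m"
      proof (intro allI impI)
        fix x assume x: "\<forall>y\<in>C. x < y"
        show "x \<le> m"
        proof (cases "a \<le> x")
          case True then show ?thesis using m x by (auto simp: pieceL_def)
        next
          case False then show ?thesis using m by (auto simp: pieceL_def)
        qed
      qed
      then show False using n m(1) unfolding lbt_def pieceL_def by blast
    qed
  qed
qed

lemma pieceR_props:
  assumes b: "\<forall>y\<in>C. y < b" and hR: "y0 < b" "\<forall>z\<in>C. z < y0"
  shows "cvx (pieceR C b)" "inner (pieceR C b) \<noteq> {}" "maxs (pieceR C b) = {}"
    "(mins (pieceR C b) = {}) = (\<not> ubt C)"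
proof -
  show "cvx (pieceR C b)" unfolding cvx_def pieceR_def
  proof (intro ballI allI impI)
    fix x z y assume h: "x \<in> {x. (\<forall>y\<in>C. y < x) \<and> x < b}" "z \<in> {x. (\<forall>y\<in>C. y < x) \<and> x < b}" "x \<le> y \<and> y \<le> z"
    have "y < b" using h by simp
    moreover have "\<forall>w\<in>C. w < y" using h by fastforce
    ultimately show "y \<in> {x. (\<forall>y\<in>C. y < x) \<and> x < b}" by simp
  qed
  define w where "w = (y0 + b) / 2"
  define w2 where "w2 = (w + b) / 2"
  have w: "y0 < w" "w < b" "w < w2" "w2 < b" using hR by (simp_all add: w_def w2_def field_simps)
  have "\<forall>z\<in>C. z < w" "\<forall>z\<in>C. z < w2" using hR w by fastforce+
  then have "y0 \<in> pieceR C b" "w \<in> pieceR C b" "w2 \<in> pieceR C b" using hR w by (simp_all add: pieceR_def)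
  then show "inner (pieceR C b) \<noteq> {}" unfolding inner_def using w by blast
  show "maxs (pieceR C b) = {}"
  proof (rule ccontr)
    assume "maxs (pieceR C b) \<noteq> {}"
    then obtain m where m: "m \<in> pieceR C b" "\<forall>y\<in>pieceR C b. y \<le> m" unfolding maxs_def by blast
    have mm: "\<forall>z\<in>C. z < m" "m < b" using m(1) by (simp_all add: pieceR_def)
    have "m < (m + b) / 2" "(m + b) / 2 < b" using mm(2) by (simp_all add: field_simps)
    moreover have "\<forall>z\<in>C. z < (m + b) / 2" using mm(1) \<open>m < (m + b) / 2\<close> by fastforce
    ultimately have "(m + b) / 2 \<in> pieceR C b" "m < (m + b) / 2" by (simp_all add: pieceR_def)
    then show False using m(2) by fastforce
  qed
  show "(mins (pieceR C b) = {}) = (\<not> ubt C)"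
  proof
    assume e: "mins (pieceR C b) = {}"
    show "\<not> ubt C"
    proof
      assume "ubt C"
      then obtain m where m: "\<forall>y\<in>C. y < m" "\<forall>x. (\<forall>y\<in>C. y < x) \<longrightarrow> m \<le> x" unfolding ubt_def by blast
      have "m \<le> y0" using m hR by blast
      then have "m \<in> mins (pieceR C b)" using m hR by (auto simp: mins_def pieceR_def)
      then show False using e by blast
    qed
  next
    assume n: "\<not> ubt C"
    show "mins (pieceR C b) = {}"
    proof (rule ccontr)
      assume "mins (pieceR C b) \<noteq> {}"
      then obtain m where m: "m \<in> pieceR C b" "\<forall>y\<in>pieceR C b. m \<le> y" unfolding mins_def by blast
      have "\<forall>x. (\<forall>y\<in>C. y < x) \<longrightarrow> m \<le> x"
      proof (intro allI impI)
        fix x assume x: "\<forall>y\<in>C. y < x"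
        show "m \<le> x"
        proof (cases "x < b")
          case True then show ?thesis using m x by (auto simp: pieceR_def)
        next
          case False then show ?thesis using m by (auto simp: pieceR_def)
        qed
      qed
      then show False using n m(1) unfolding ubt_def pieceR_def by blast
    qed
  qed
qed

lemma piece_split:
  assumes f: "aut f" and C: "C \<in> nontriv_orbitals f" and a: "\<forall>y\<in>C. a < y" and b: "\<forall>y\<in>C. y < b"
  shows "{a..<b} = (pieceL a C \<union> C) \<union> pieceR C b" "setlt (pieceL a C) C" "setlt (pieceL a C \<union> C) (pieceR C b)"
proof -
  show "setlt (pieceL a C) C" unfolding setlt_def pieceL_def by blast
  obtain y0 where y0: "y0 \<in> C" using C nontriv_mem by blast
  show "setlt (pieceL a C \<union> C) (pieceR C b)" unfolding setlt_def
  proof (intro ballI)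
    fix x z assume x: "x \<in> pieceL a C \<union> C" and z: "z \<in> pieceR C b"
    have zc: "\<forall>w\<in>C. w < z" using z by (simp add: pieceR_def)
    show "x < z" using x
    proof
      assume "x \<in> pieceL a C" then have "x < y0" using y0 by (simp add: pieceL_def)
      then show "x < z" using zc y0 by fastforce
    next
      assume "x \<in> C" then show "x < z" using zc by blast
    qed
  qed
  show "{a..<b} = (pieceL a C \<union> C) \<union> pieceR C b"
  proof
    show "{a..<b} \<subseteq> (pieceL a C \<union> C) \<union> pieceR C b"
    proof
      fix x assume x: "x \<in> {a..<b}"
      show "x \<in> (pieceL a C \<union> C) \<union> pieceR C b"
      proof (cases "x \<in> C")
        case True then show ?thesis by blast
      next
        case False
        show ?thesis
        proof (cases "\<forall>y\<in>C. x < y")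
          case True then show ?thesis using x by (simp add: pieceL_def)
        next
          case nb: False
          then obtain y where y: "y \<in> C" "y \<le> x" by force
          have "\<forall>z\<in>C. z < x"
          proof
            fix z assume z: "z \<in> C"
            show "z < x"
            proof (rule ccontr)
              assume "\<not> z < x"
              then have "x \<in> C" using nontriv_convex[OF f C y(1) z y(2)] by simp
              then show False using False by simp
            qed
          qed
          then show ?thesis using x by (simp add: pieceR_def)
        qed
      qed
    qed
  next
    show "(pieceL a C \<union> C) \<union> pieceR C b \<subseteq> {a..<b}"
    proof
      fix x assume x: "x \<in> (pieceL a C \<union> C) \<union> pieceR C b"
      have ay: "a < y0" "y0 < b" using a b y0 by auto
      show "x \<in> {a..<b}" using x
      proof (elim UnE)
        assume "x \<in> pieceL a C" then have "a \<le> x" "x < y0" using y0 by (simp_all add: pieceL_def)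
        then show ?thesis using ay by simp
      next
        assume "x \<in> C" then show ?thesis using a b by fastforce
      next
        assume "x \<in> pieceR C b" then have "y0 < x" "x < b" using y0 by (simp_all add: pieceR_def)
        then show ?thesis using ay by simp
      qed
    qed
  qed
qed

lemma piece_conj:
  assumes f: "aut f" and C: "C \<in> nontriv_orbitals f" and C': "C' \<in> nontriv_orbitals f"
    and dir: "(\<forall>x\<in>C. x < f x) = (\<forall>x\<in>C'. x < f x)"
    and lb: "lbt C = lbt C'" and ub: "ubt C = ubt C'"
    and a: "\<forall>y\<in>C. a < y" "a < y1" "\<forall>z\<in>C. y1 < z"
    and b: "\<forall>y\<in>C. y < b" "y2 < b" "\<forall>z\<in>C. z < y2"
    and a': "\<forall>y\<in>C'. a' < y" "a' < y1'" "\<forall>z\<in>C'. y1' < z"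
    and b': "\<forall>y\<in>C'. y < b'" "y2' < b'" "\<forall>z\<in>C'. z < y2'"
    and g: "\<forall>x\<in>C. g x = f x" "\<forall>x. a \<le> x \<and> x < b \<and> x \<notin> C \<longrightarrow> g x = x"
    and g': "\<forall>x\<in>C'. g' x = f x" "\<forall>x. a' \<le> x \<and> x < b' \<and> x \<notin> C' \<longrightarrow> g' x = x"
  shows "\<exists>\<psi>. ordiso {a..<b} {a'..<b'} \<psi> \<and> (\<forall>x\<in>{a..<b}. \<psi> (g x) = g' (\<psi> x))"
proof -
  note L = pieceL_props[OF a] and L' = pieceL_props[OF a']
  note R = pieceR_props[OF b] and R' = pieceR_props[OF b']
  obtain \<phi>L where \<phi>L: "ordiso (pieceL a C) (pieceL a' C') \<phi>L"
    using cvx_iso2[OF L(1,2) L'(1,2)] L(3) L'(3) L(4) L'(4) lb by blast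
  obtain \<phi>R where \<phi>R: "ordiso (pieceR C b) (pieceR C' b') \<phi>R"
    using cvx_iso2[OF R(1,2) R'(1,2)] R(3) R'(3) R(4) R'(4) ub by blast
  obtain \<psi>C where \<psi>C: "ordiso C C' \<psi>C" "\<forall>x\<in>C. \<psi>C (f x) = f (\<psi>C x)"
    using bump_conj[OF f C C' dir] by blast
  note S = piece_split[OF f C a(1) b(1)] and S' = piece_split[OF f C' a'(1) b'(1)]
  define \<psi>1 where "\<psi>1 = (\<lambda>x. if x \<in> pieceL a C then \<phi>L x else \<psi>C x)"
  have i1: "ordiso (pieceL a C \<union> C) (pieceL a' C' \<union> C') \<psi>1"
    unfolding \<psi>1_def by (rule ordiso_glue2[OF \<phi>L \<psi>C(1) S(2) S'(2)])
  define \<psi> where "\<psi> = (\<lambda>x. if x \<in> pieceL a C \<union> C then \<psi>1 x else \<phi>R x)"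
  have i2: "ordiso {a..<b} {a'..<b'} \<psi>"
    unfolding \<psi>_def using ordiso_glue2[OF i1 \<phi>R S(3) S'(3)] S(1) S'(1) by simp
  have dL: "x \<notin> C" if "x \<in> pieceL a C" for x using that unfolding pieceL_def by blast
  have dR: "x \<notin> C" if "x \<in> pieceR C b" for x using that unfolding pieceR_def by blast
  have dR2: "x \<notin> pieceL a C" if "x \<in> pieceR C b" for x
    using that S(3) unfolding setlt_def by force
  have dL': "x \<notin> C'" if "x \<in> pieceL a' C'" for x using that unfolding pieceL_def by blast
  have dR': "x \<notin> C'" if "x \<in> pieceR C' b'" for x using that unfolding pieceR_def by blast
  have comm: "\<psi> (g x) = g' (\<psi> x)" if x: "x \<in> {a..<b}" for x
  proof -
    consider "x \<in> pieceL a C" | "x \<in> C" | "x \<in> pieceR C b" using x S(1) by blast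
    then show ?thesis
    proof cases
      case 1
      have gx: "g x = x" using g(2) x dL[OF 1] by simp
      have "\<psi> x = \<phi>L x" using 1 by (simp add: \<psi>_def \<psi>1_def)
      moreover have "\<phi>L x \<in> pieceL a' C'" using ordiso_in[OF \<phi>L 1] .
      moreover have "pieceL a' C' \<subseteq> {a'..<b'}" using S'(1) by blast
      ultimately have "\<phi>L x \<in> {a'..<b'}" "\<phi>L x \<notin> C'" using dL' by blast+
      then have "g' (\<phi>L x) = \<phi>L x" using g'(2) by simp
      then show ?thesis using gx \<open>\<psi> x = \<phi>L x\<close> by simp
    next
      case 2
      have gx: "g x = f x" "f x \<in> C" using g(1) 2 nontriv_f[OF f C] by auto
      have "\<psi> x = \<psi>C x" "\<psi> (f x) = \<psi>C (f x)" using 2 gx dL by (auto simp: \<psi>_def \<psi>1_def)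
      moreover have "\<psi>C x \<in> C'" using ordiso_in[OF \<psi>C(1) 2] .
      ultimately show ?thesis using gx \<psi>C(2) 2 g'(1) by simp
    next
      case 3
      have gx: "g x = x" using g(2) x dR[OF 3] by simp
      have "\<psi> x = \<phi>R x" using 3 dR dR2 by (simp add: \<psi>_def \<psi>1_def)
      moreover have "\<phi>R x \<in> pieceR C' b'" using ordiso_in[OF \<phi>R 3] .
      moreover have "pieceR C' b' \<subseteq> {a'..<b'}" using S'(1) by blast
      ultimately have "\<phi>R x \<in> {a'..<b'}" "\<phi>R x \<notin> C'" using dR' by blast+
      then have "g' (\<phi>R x) = \<phi>R x" using g'(2) by simp
      then show ?thesis using gx \<open>\<psi> x = \<phi>R x\<close> by simp
    qed
  qed
  show ?thesis using i2 comm by blast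
qed


lemma nontriv_above: assumes f: "aut f" and D: "D \<in> nontriv_orbitals f" and x: "x \<in> D"
  shows "\<exists>y\<in>D. x < y"
proof -
  have "f x \<noteq> x" by (rule nontriv_moved[OF f D x])
  then consider "x < f x" | "f x < x" by linarith
  then show ?thesis
  proof cases
    case 1 then show ?thesis using nontriv_f[OF f D x] by blast
  next
    case 2
    then have "x < inv f x" using aut_less[OF f, of x "inv f x"] aut_f_inv[OF f] by simp
    then show ?thesis using nontriv_finv[OF f D x] by blast
  qed
qed

lemma nontriv_below: assumes f: "aut f" and D: "D \<in> nontriv_orbitals f" and x: "x \<in> D"
  shows "\<exists>y\<in>D. y < x"
proof -
  have "f x \<noteq> x" by (rule nontriv_moved[OF f D x])
  then consider "x < f x" | "f x < x" by linarith
  then show ?thesis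
  proof cases
    case 2 then show ?thesis using nontriv_f[OF f D x] by blast
  next
    case 1
    then have "inv f x < x" using aut_less[OF f, of "inv f x" x] aut_f_inv[OF f] by simp
    then show ?thesis using nontriv_finv[OF f D x] by blast
  qed
qed

locale omg =
  fixes f :: "rat \<Rightarrow> rat" and P :: "nat \<Rightarrow> rat set"
  assumes f: "aut f" and P: "\<And>n. P n \<in> nontriv_orbitals f"
    and inc: "\<And>i j. i < j \<Longrightarrow> setlt (P i) (P j)"
    and tl: "\<And>n. lbt (P n) = lbt (P 0)" and tu: "\<And>n. ubt (P n) = ubt (P 0)"
    and td: "\<And>n. (\<forall>x\<in>P n. x < f x) = (\<forall>x\<in>P 0. x < f x)"
begin

definition C :: "nat \<Rightarrow> rat set" where "C k = P (2*k+1)"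
definition q :: "nat \<Rightarrow> rat" where "q k = (SOME x. x \<in> P (2*k))"

lemma C_nt: "C k \<in> nontriv_orbitals f" by (simp add: C_def P)

lemma q_in: "q k \<in> P (2*k)"
proof -
  have "\<exists>x. x \<in> P (2*k)" using P[of "2*k"] unfolding nontriv_mem by blast
  then show ?thesis unfolding q_def by (rule someI_ex)
qed

lemma q_C: "y \<in> C k \<Longrightarrow> q k < y"
  using inc[of "2*k" "2*k+1"] q_in[of k] unfolding setlt_def C_def by simp
lemma C_q: "y \<in> C k \<Longrightarrow> y < q (Suc k)"
  using inc[of "2*k+1" "2*(Suc k)"] q_in[of "Suc k"] unfolding setlt_def C_def by simp

lemma C_ne: "\<exists>y. y \<in> C k" using C_nt[of k] unfolding nontriv_mem by blast

lemma q_step: "q k < q (Suc k)"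
proof -
  obtain y where "y \<in> C k" using C_ne by blast
  then show ?thesis using q_C C_q by fastforce
qed

lemma q_mono: "i \<le> j \<Longrightarrow> q i \<le> q j"
proof (induction j)
  case 0 then show ?case by simp
next
  case (Suc j)
  then show ?case
  proof (cases "i \<le> j")
    case True then show ?thesis using Suc q_step[of j] by simp
  next
    case False then have "i = Suc j" using Suc by simp
    then show ?thesis by simp
  qed
qed

lemma C_lt: "y \<in> C k \<Longrightarrow> q j \<le> q k \<or> q (Suc k) \<le> q j"
  by (cases "j \<le> k") (simp_all add: q_mono)

lemma C_other: assumes "y \<in> C j" "q k \<le> y" "y < q (Suc k)" shows "j = k"
proof (rule ccontr)
  assume "j \<noteq> k"
  then consider "Suc j \<le> k" | "Suc k \<le> j" by linarith
  then show False
  proof cases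
    case 1
    then have "q (Suc j) \<le> q k" by (rule q_mono)
    then show False using C_q[OF assms(1)] assms(2) by simp
  next
    case 2
    then have "q (Suc k) \<le> q j" by (rule q_mono)
    then show False using q_C[OF assms(1)] assms(3) by simp
  qed
qed

lemma left_pt: "\<exists>y1. q k < y1 \<and> (\<forall>z\<in>C k. y1 < z)"
proof -
  obtain y where y: "y \<in> P (2*k)" "q k < y" using nontriv_above[OF f P q_in] by blast
  have "\<forall>z\<in>C k. y < z" using inc[of "2*k" "2*k+1"] y(1) unfolding setlt_def C_def by simp
  then show ?thesis using y by blast
qed

lemma right_pt: "\<exists>y2. y2 < q (Suc k) \<and> (\<forall>z\<in>C k. z < y2)"
proof -
  obtain y where y: "y \<in> P (2*Suc k)" "y < q (Suc k)" using nontriv_below[OF f P q_in] by blast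
  have "\<forall>z\<in>C k. z < y" using inc[of "2*k+1" "2*Suc k"] y(1) unfolding setlt_def C_def by simp
  then show ?thesis using y by blast
qed

definition U :: "rat set" where "U = \<Union>(range C)"
definition U1 :: "rat set" where "U1 = \<Union>(C ` {k. 1 \<le> k})"

lemma U_oc: "oclosed f U" unfolding U_def by (rule oclosed_union[OF f]) (auto simp: C_nt)
lemma U1_oc: "oclosed f U1" unfolding U1_def by (rule oclosed_union[OF f]) (auto simp: C_nt)
lemma C0_oc: "oclosed f (C 0)" using oclosed_union[OF f, of "{C 0}"] C_nt by simp

definition g :: "rat \<Rightarrow> rat" where "g = rst f U"
definition g1 :: "rat \<Rightarrow> rat" where "g1 = rst f (C 0)"
definition g2 :: "rat \<Rightarrow> rat" where "g2 = rst f U1"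

lemma g_aut: "aut g" unfolding g_def by (rule rst_aut[OF f U_oc])
lemma g1_aut: "aut g1" unfolding g1_def by (rule rst_aut[OF f C0_oc])
lemma g2_aut: "aut g2" unfolding g2_def by (rule rst_aut[OF f U1_oc])

lemma in_U_piece: assumes "x \<in> U" "q k \<le> x" "x < q (Suc k)" shows "x \<in> C k"
proof -
  obtain j where "x \<in> C j" using assms(1) unfolding U_def by blast
  then show ?thesis using C_other[OF _ assms(2,3)] by metis
qed

lemma g_piece: assumes "q k \<le> x" "x < q (Suc k)"
  shows "x \<in> C k \<Longrightarrow> g x = f x" "x \<notin> C k \<Longrightarrow> g x = x"
proof -
  show "x \<in> C k \<Longrightarrow> g x = f x" unfolding g_def U_def by (simp add: rst_def) blast
  show "x \<notin> C k \<Longrightarrow> g x = x"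
  proof -
    assume "x \<notin> C k"
    then have "x \<notin> U" using in_U_piece[OF _ assms] by blast
    then show "g x = x" unfolding g_def by (simp add: rst_def)
  qed
qed

lemma g2_piece: assumes "q (Suc k) \<le> x" "x < q (Suc (Suc k))"
  shows "x \<in> C (Suc k) \<Longrightarrow> g2 x = f x" "x \<notin> C (Suc k) \<Longrightarrow> g2 x = x"
proof -
  show "x \<in> C (Suc k) \<Longrightarrow> g2 x = f x" unfolding g2_def U1_def
  proof -
    assume "x \<in> C (Suc k)"
    then have "x \<in> \<Union> (C ` {k. 1 \<le> k})" by force
    then show "rst f (\<Union> (C ` {k. 1 \<le> k})) x = f x" by (simp add: rst_def)
  qed
  show "x \<notin> C (Suc k) \<Longrightarrow> g2 x = x"
  proof -
    assume n: "x \<notin> C (Suc k)"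
    have "x \<notin> U1"
    proof
      assume "x \<in> U1"
      then obtain j where "x \<in> C j" unfolding U1_def by blast
      then have "j = Suc k" using C_other[OF _ assms] by blast
      then show False using n \<open>x \<in> C j\<close> by simp
    qed
    then show "g2 x = x" unfolding g2_def by (simp add: rst_def)
  qed
qed

lemma piece_iso: "\<exists>\<psi>. ordiso {q k..<q (Suc k)} {q (Suc k)..<q (Suc (Suc k))} \<psi>
   \<and> (\<forall>x\<in>{q k..<q (Suc k)}. \<psi> (g x) = g2 (\<psi> x))"
proof -
  obtain y1 where y1: "q k < y1" "\<forall>z\<in>C k. y1 < z" using left_pt by blast
  obtain y2 where y2: "y2 < q (Suc k)" "\<forall>z\<in>C k. z < y2" using right_pt by blast
  obtain y1' where y1': "q (Suc k) < y1'" "\<forall>z\<in>C (Suc k). y1' < z" using left_pt by blast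
  obtain y2' where y2': "y2' < q (Suc (Suc k))" "\<forall>z\<in>C (Suc k). z < y2'" using right_pt by blast
  have dir: "(\<forall>x\<in>C k. x < f x) = (\<forall>x\<in>C (Suc k). x < f x)" using td unfolding C_def by metis
  have lb: "lbt (C k) = lbt (C (Suc k))" using tl unfolding C_def by metis
  have ub: "ubt (C k) = ubt (C (Suc k))" using tu unfolding C_def by metis
  have a: "\<forall>y\<in>C k. q k < y" using q_C by blast
  have b: "\<forall>y\<in>C k. y < q (Suc k)" using C_q by blast
  have a': "\<forall>y\<in>C (Suc k). q (Suc k) < y" using q_C by blast
  have b': "\<forall>y\<in>C (Suc k). y < q (Suc (Suc k))" using C_q by blast
  have gC: "\<forall>x\<in>C k. g x = f x" using g_piece a b by (meson less_imp_le)
  have gO: "\<forall>x. q k \<le> x \<and> x < q (Suc k) \<and> x \<notin> C k \<longrightarrow> g x = x" using g_piece by blast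
  have g2C: "\<forall>x\<in>C (Suc k). g2 x = f x" using g2_piece a' b' by (meson less_imp_le)
  have g2O: "\<forall>x. q (Suc k) \<le> x \<and> x < q (Suc (Suc k)) \<and> x \<notin> C (Suc k) \<longrightarrow> g2 x = x" using g2_piece by blast
  show ?thesis
    by (rule piece_conj[OF f C_nt C_nt dir lb ub a y1 b y2 a' y1' b' y2' gC gO g2C g2O])
qed

end


context omg begin

lemma C_disj: assumes "j \<noteq> k" "x \<in> C j" shows "x \<notin> C k"
proof
  assume "x \<in> C k"
  have "q j \<le> x" "x < q (Suc j)" using q_C[OF assms(2)] C_q[OF assms(2)] by simp_all
  then have "k = j" using C_other[OF \<open>x \<in> C k\<close>] by blast
  then show False using assms(1) by simp
qed

lemma g_restr: "restriction_of g f"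
  unfolding restriction_of_def supp_def
proof (intro conjI ballI subsetI)
  fix x assume "x \<in> {x. g x \<noteq> x}"
  then have "g x \<noteq> x" by simp
  then have "x \<in> U" unfolding g_def by (auto simp: rst_def split: if_splits)
  then show "x \<in> {x. f x \<noteq> x}" using \<open>g x \<noteq> x\<close> unfolding g_def by (simp add: rst_def)
next
  fix x assume "x \<in> {x. g x \<noteq> x}"
  then have "g x \<noteq> x" by simp
  then have "x \<in> U" unfolding g_def by (auto simp: rst_def split: if_splits)
  then show "g x = f x" unfolding g_def by (simp add: rst_def)
qed

lemma C0_U: "C 0 \<subseteq> U" unfolding U_def by blast

lemma g1_bump: "bump g1"
proof -
  obtain x where x: "x \<in> C 0" using C_ne by blast
  have "g1 x = f x" using x by (simp add: g1_def rst_def)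
  then have "g1 x \<noteq> x" using nontriv_moved[OF f C_nt x] by simp
  then have ne: "g1 \<noteq> id" by auto
  have "nontriv_orbitals g1 = {D \<in> nontriv_orbitals f. D \<subseteq> C 0}"
    unfolding g1_def by (rule rst_nontriv[OF f C0_oc])
  also have "\<dots> = {C 0}"
  proof
    show "{D \<in> nontriv_orbitals f. D \<subseteq> C 0} \<subseteq> {C 0}"
    proof
      fix D assume D: "D \<in> {D \<in> nontriv_orbitals f. D \<subseteq> C 0}"
      then have D1: "D \<in> nontriv_orbitals f" and D2: "D \<subseteq> C 0" by simp_all
      obtain y where y: "y \<in> D" using D1 unfolding nontriv_mem by blast
      then have "y \<in> C 0" using D2 by blast
      then have "D = C 0" using nontriv_disj[OF f D1 C_nt y] by simp
      then show "D \<in> {C 0}" by simp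
    qed
  next
    show "{C 0} \<subseteq> {D \<in> nontriv_orbitals f. D \<subseteq> C 0}" using C_nt by simp
  qed
  finally have "\<exists>!D. D \<in> nontriv_orbitals g1" by simp
  then show ?thesis unfolding bump_def using g1_aut ne by blast
qed

lemma g1_orb: "orbital_elt_of g1 g"
  unfolding orbital_elt_of_def
proof (intro conjI g1_bump ballI subsetI)
  fix x assume "x \<in> supp g1"
  then have "g1 x \<noteq> x" by (simp add: supp_def)
  then have x: "x \<in> C 0" unfolding g1_def by (auto simp: rst_def split: if_splits)
  then have "x \<in> U" using C0_U by blast
  then have "g x = f x" "g1 x = f x" using x by (simp_all add: g_def g1_def rst_def)
  then show "x \<in> supp g" "g1 x = g x" using \<open>g1 x \<noteq> x\<close> by (simp_all add: supp_def)
qed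

lemma g_comp: "g = g1 \<circ> g2"
proof
  fix x
  show "g x = (g1 \<circ> g2) x"
  proof (cases "x \<in> C 0")
    case True
    have "x \<notin> U1"
    proof
      assume "x \<in> U1" then obtain j where "1 \<le> j" "x \<in> C j" unfolding U1_def by blast
      then show False using C_disj[of j 0 x] True by simp
    qed
    then show ?thesis using True C0_U by (auto simp: g_def g1_def g2_def rst_def)
  next
    case n0: False
    show ?thesis
    proof (cases "x \<in> U1")
      case True
      then obtain j where j: "1 \<le> j" "x \<in> C j" unfolding U1_def by blast
      have "f x \<in> C j" using nontriv_f[OF f C_nt j(2)] .
      then have "f x \<notin> C 0" using C_disj[of j 0 "f x"] j(1) by simp
      moreover have "x \<in> U" using j unfolding U_def by blast
      ultimately show ?thesis using True by (simp add: g_def g1_def g2_def rst_def)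
    next
      case False
      have "x \<notin> U"
      proof
        assume "x \<in> U" then obtain j where j: "x \<in> C j" unfolding U_def by blast
        show False
        proof (cases "j = 0")
          case True then show False using n0 j by simp
        next
          case False then have "1 \<le> j" by simp
          then have "x \<in> U1" using j unfolding U1_def by blast
          then show False using \<open>x \<notin> U1\<close> by simp
        qed
      qed
      then show ?thesis using False n0 by (simp add: g_def g1_def g2_def rst_def)
    qed
  qed
qed

end


context omg begin

definition c :: "int \<Rightarrow> rat" where "c n = (if 0 \<le> n then q (nat n) else q 0 + of_int n)"

lemma c_nat: "c (int k) = q k" by (simp add: c_def)

lemma c_step: "c n < c (n+1)"
proof (cases "0 \<le> n")
  case True
  then have "nat (n+1) = Suc (nat n)" by simp
  then show ?thesis using True q_step by (simp add: c_def)
next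
  case False
  show ?thesis
  proof (cases "n = -1")
    case True then show ?thesis by (simp add: c_def)
  next
    case False
    then have "n + 1 < 0" using \<open>\<not> 0 \<le> n\<close> by simp
    then show ?thesis using \<open>\<not> 0 \<le> n\<close> by (simp add: c_def)
  qed
qed

lemma c_sm: "strict_mono c" using c_step by (rule int_smonoI)

definition d :: "int \<Rightarrow> rat" where "d n = c (n+1)"
lemma d_sm: "strict_mono d" unfolding d_def using c_sm by (simp add: strict_mono_def)

definition psi :: "nat \<Rightarrow> rat \<Rightarrow> rat" where
  "psi k = (SOME \<psi>. ordiso {q k..<q (Suc k)} {q (Suc k)..<q (Suc (Suc k))} \<psi>
      \<and> (\<forall>x\<in>{q k..<q (Suc k)}. \<psi> (g x) = g2 (\<psi> x)))"

lemma psi_prop: "ordiso {q k..<q (Suc k)} {q (Suc k)..<q (Suc (Suc k))} (psi k)"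
  "\<forall>x\<in>{q k..<q (Suc k)}. psi k (g x) = g2 (psi k x)"
proof -
  from someI_ex[OF piece_iso[of k]]
  show "ordiso {q k..<q (Suc k)} {q (Suc k)..<q (Suc (Suc k))} (psi k)"
    "\<forall>x\<in>{q k..<q (Suc k)}. psi k (g x) = g2 (psi k x)" unfolding psi_def by blast+
qed

definition Phi :: "int \<Rightarrow> rat \<Rightarrow> rat" where
  "Phi n = (if 0 \<le> n then psi (nat n)
     else (\<lambda>x. c (n+1) + (x - c n) * ((c (n+1+1) - c (n+1)) / (c (n+1) - c n))))"

lemma c_nonneg: "0 \<le> n \<Longrightarrow> c n = q (nat n)" "0 \<le> n \<Longrightarrow> c (n+1) = q (Suc (nat n))"
  "0 \<le> n \<Longrightarrow> c (n+1+1) = q (Suc (Suc (nat n)))"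
proof -
  assume n: "0 \<le> n"
  show "c n = q (nat n)" using n by (simp add: c_def)
  have "nat (n+1) = Suc (nat n)" using n by simp
  then show "c (n+1) = q (Suc (nat n))" using n by (simp add: c_def)
  have "nat (n+1+1) = Suc (Suc (nat n))" using n by simp
  then show "c (n+1+1) = q (Suc (Suc (nat n)))" using n by (simp add: c_def)
qed

lemma Phi_iso: "ordiso {c n..<c (n+1)} {d n..<d (n+1)} (Phi n)"
proof (cases "0 \<le> n")
  case True
  then show ?thesis using psi_prop(1)[of "nat n"] c_nonneg[OF True] by (simp add: Phi_def d_def)
next
  case False
  have "ordiso {c n..<c (n+1)} {c (n+1)..<c (n+1+1)}
     (\<lambda>x. c (n+1) + (x - c n) * ((c (n+1+1) - c (n+1)) / (c (n+1) - c n)))"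
    by (rule ordiso_affine) (use c_step[of n] c_step[of "n+1"] in simp_all)
  then show ?thesis using False by (simp add: Phi_def d_def)
qed

definition hc :: "rat \<Rightarrow> rat" where "hc = (\<lambda>x. Phi (chainN c x) x)"

lemma hc_iso: "ordiso (chainU c) (chainU d) hc"
  unfolding hc_def by (rule chain_glue[OF c_sm d_sm Phi_iso])

lemma chainU_d: "chainU d = chainU c"
proof
  show "chainU d \<subseteq> chainU c" unfolding chainU_def d_def by auto
  show "chainU c \<subseteq> chainU d"
  proof
    fix x assume "x \<in> chainU c"
    then obtain n where "c n \<le> x" "x < c (n+1)" unfolding chainU_def by blast
    then have "d (n-1) \<le> x" "x < d (n-1+1)" unfolding d_def by simp_all
    then show "x \<in> chainU d" unfolding chainU_def by blast
  qed
qed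

lemma notU_ge: assumes "x \<notin> chainU c" shows "c n \<le> x"
proof (rule ccontr)
  assume "\<not> c n \<le> x"
  then have xn: "x < c n" by simp
  obtain m where m: "c m \<le> x"
  proof (cases "q 0 \<le> x")
    case True then show ?thesis using that[of 0] by (simp add: c_def)
  next
    case False
    define m where "m = \<lfloor>x - q 0\<rfloor>"
    have "m < 0" using False unfolding m_def by linarith
    moreover have "of_int m \<le> x - q 0" unfolding m_def by (rule of_int_floor_le)
    ultimately have "c m \<le> x" by (simp add: c_def)
    then show ?thesis by (rule that)
  qed
  have "x \<in> chainU c" by (rule chainU_I[OF c_sm m xn])
  then show False using assms by simp
qed

definition h :: "rat \<Rightarrow> rat" where "h = (\<lambda>x. if x \<in> chainU c then hc x else x)"

lemma h_aut: "aut h"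
proof -
  have i1: "ordiso (chainU c) (chainU c) hc" using hc_iso chainU_d by simp
  have i2: "ordiso (- chainU c) (- chainU c) (\<lambda>x. x)" unfolding ordiso_def smono_on_def by simp
  have lt: "setlt (chainU c) (- chainU c)" unfolding setlt_def
  proof (intro ballI)
    fix x y assume x: "x \<in> chainU c" and y: "y \<in> - chainU c"
    obtain n where "x < c (n+1)" using x unfolding chainU_def by blast
    moreover have "c (n+1) \<le> y" using notU_ge y by simp
    ultimately show "x < y" by simp
  qed
  have "ordiso (chainU c \<union> - chainU c) (chainU c \<union> - chainU c) (\<lambda>x. if x \<in> chainU c then hc x else x)"
    by (rule ordiso_glue2[OF i1 i2 lt lt])
  then have "ordiso UNIV UNIV h" unfolding h_def by simp
  then have "strict_mono h" "surj h" unfolding ordiso_def smono_on_def strict_mono_def by auto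
  then show ?thesis by (rule smono_surj_aut)
qed

lemma below_q0: assumes "x < q 0" shows "x \<notin> U"
proof
  assume "x \<in> U" then obtain j where j: "x \<in> C j" unfolding U_def by blast
  have "q 0 \<le> q j" by (rule q_mono) simp
  then show False using q_C[OF j] assms by simp
qed

lemma below_q1: assumes "y < q 1" shows "y \<notin> U1"
proof
  assume "y \<in> U1" then obtain j where j: "1 \<le> j" "y \<in> C j" unfolding U1_def by blast
  have "q 1 \<le> q j" by (rule q_mono) (use j in simp)
  then show False using q_C[OF j(2)] assms by simp
qed

lemma above_all: assumes "\<forall>k. q k \<le> x" shows "x \<notin> U" "x \<notin> U1"
proof -
  have "x \<notin> C j" for j
  proof
    assume "x \<in> C j" then show False using C_q[OF \<open>x \<in> C j\<close>] spec[OF assms, of "Suc j"] by simp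
  qed
  then show "x \<notin> U" "x \<notin> U1" unfolding U_def U1_def by blast+
qed

lemma comm: "h (g x) = g2 (h x)"
proof (cases "x \<in> chainU c")
  case False
  have "\<forall>k. q k \<le> x" using notU_ge[OF False] c_nat by metis
  then have "g x = x" "g2 x = x" using above_all by (simp_all add: g_def g2_def rst_def)
  moreover have "h x = x" using False by (simp add: h_def)
  ultimately show ?thesis by simp
next
  case True
  define n where "n = chainN c x"
  have n: "c n \<le> x" "x < c (n+1)" using chainN_prop[OF c_sm True] n_def by auto
  have hx: "h x = Phi n x" using True by (simp add: h_def hc_def n_def)
  show ?thesis
  proof (cases "0 \<le> n")
    case False
    have "c (n+1) \<le> c 0" using False c_sm by (simp add: strict_mono_less_eq)
    then have "x < q 0" using n by (simp add: c_def)
    then have gx: "g x = x" using below_q0 by (simp add: g_def rst_def)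
    have "Phi n x < d (n+1)" using ordiso_in[OF Phi_iso[of n]] n by simp
    moreover have "d (n+1) \<le> c 1" using False c_sm unfolding d_def by (simp add: strict_mono_less_eq)
    ultimately have "h x < q 1" using hx by (simp add: c_def)
    then have "g2 (h x) = h x" using below_q1 by (simp add: g2_def rst_def)
    then show ?thesis using gx by simp
  next
    case True
    define k where "k = nat n"
    have qk: "q k \<le> x" "x < q (Suc k)" using n c_nonneg[OF True] k_def by simp_all
    have gq: "q k \<le> g x \<and> g x < q (Suc k)"
    proof (cases "x \<in> C k")
      case True
      then have "g x = f x" "f x \<in> C k" using g_piece(1)[OF qk] nontriv_f[OF f C_nt] by auto
      then show ?thesis using q_C C_q by (simp add: less_imp_le)
    next
      case False then show ?thesis using g_piece(2)[OF qk] qk by simp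
    qed
    then have gc: "c n \<le> g x" "g x < c (n+1)" using c_nonneg[OF True] k_def by simp_all
    then have "g x \<in> chainU c" unfolding chainU_def by blast
    then have "h (g x) = Phi n (g x)" using chainN_eq[OF c_sm gc] by (simp add: h_def hc_def)
    also have "\<dots> = psi k (g x)" using True by (simp add: Phi_def k_def)
    also have "\<dots> = g2 (psi k x)" using psi_prop(2)[of k] qk by simp
    also have "psi k x = h x" using hx True by (simp add: Phi_def k_def)
    finally show ?thesis .
  qed
qed

lemma g2_conj: "g2 = h \<circ> g \<circ> inv h"
proof
  fix y
  have "(h \<circ> g \<circ> inv h) y = g2 (h (inv h y))" using comm by simp
  also have "\<dots> = g2 y" using aut_f_inv[OF h_aut] by simp
  finally show "g2 y = (h \<circ> g \<circ> inv h) y" by simp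
qed

lemma result: "\<exists>g g1 g2. aut g \<and> aut g1 \<and> aut g2 \<and>
            restriction_of g f \<and> orbital_elt_of g1 g \<and> g = g1 \<circ> g2 \<and>
            (\<exists>h. aut h \<and> g2 = h \<circ> g \<circ> inv h)"
  using g_aut g1_aut g2_aut g_restr g1_orb g_comp h_aut g2_conj by blast

end


definition Pf :: "(rat \<Rightarrow> rat) \<Rightarrow> bool" where
  "Pf f \<longleftrightarrow> (\<exists>g g1 g2. aut g \<and> aut g1 \<and> aut g2 \<and>
            restriction_of g f \<and> orbital_elt_of g1 g \<and> g = g1 \<circ> g2 \<and>
            (\<exists>h. aut h \<and> g2 = h \<circ> g \<circ> inv h))"

lemma setlt_trans: "setlt A B \<Longrightarrow> setlt B D \<Longrightarrow> B \<noteq> {} \<Longrightarrow> setlt A D"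
  unfolding setlt_def by (meson ex_in_conv order.strict_trans)

lemma omega_main:
  assumes f: "aut f" and Os: "\<And>n. Os n \<in> nontriv_orbitals f" and inc: "\<And>n. setlt (Os n) (Os (Suc n))"
  shows "Pf f"
proof -
  have ne: "Os n \<noteq> {}" for n using Os[of n] unfolding nontriv_mem by blast
  have inc2: "i < j \<Longrightarrow> setlt (Os i) (Os j)" for i j
  proof (induction j)
    case 0 then show ?case by simp
  next
    case (Suc j)
    show ?case
    proof (cases "i = j")
      case True then show ?thesis using inc by simp
    next
      case False then have "i < j" using Suc by simp
      then show ?thesis using Suc setlt_trans[OF _ inc ne] by blast
    qed
  qed
  define tyf where "tyf = (\<lambda>n. (lbt (Os n), ubt (Os n), (\<forall>x\<in>Os n. x < f x)))"
  have "finite (tyf ` UNIV)" by (rule finite_subset[of _ UNIV]) simp_all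
  then obtain a0 where "infinite {a\<in>UNIV. tyf a = tyf a0}"
    using pigeonhole_infinite[of "UNIV :: nat set" tyf] by auto
  then obtain r :: "nat \<Rightarrow> nat" where r: "strict_mono r" "\<And>n. r n \<in> {a\<in>UNIV. tyf a = tyf a0}"
    using infinite_enumerate by blast
  define P where "P = (\<lambda>n. Os (r n))"
  have ty: "tyf (r n) = tyf a0" for n using r(2)[of n] by simp
  interpret omg f P
  proof
    show "aut f" by (rule f)
    show "P n \<in> nontriv_orbitals f" for n unfolding P_def by (rule Os)
    show "i < j \<Longrightarrow> setlt (P i) (P j)" for i j unfolding P_def using inc2 r(1) strict_monoD by blast
    show "lbt (P n) = lbt (P 0)" for n using ty[of n] ty[of 0] unfolding P_def tyf_def by simp
    show "ubt (P n) = ubt (P 0)" for n using ty[of n] ty[of 0] unfolding P_def tyf_def by simp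
    show "(\<forall>x\<in>P n. x < f x) = (\<forall>x\<in>P 0. x < f x)" for n using ty[of n] ty[of 0] unfolding P_def tyf_def by simp
  qed
  show ?thesis unfolding Pf_def by (rule result)
qed


definition mir :: "(rat \<Rightarrow> rat) \<Rightarrow> rat \<Rightarrow> rat" where "mir k = (\<lambda>x. - k (- x))"

lemma mir_mir[simp]: "mir (mir k) = k" by (simp add: mir_def)
lemma mir_id[simp]: "mir id = id" by (simp add: mir_def fun_eq_iff)
lemma mir_comp: "mir (a \<circ> b) = mir a \<circ> mir b" by (simp add: mir_def fun_eq_iff)

lemma aut_mir: assumes "aut k" shows "aut (mir k)"
proof -
  have "strict_mono (mir k)"
  proof (rule strict_monoI)
    fix x y :: rat assume "x < y"
    then have "k (-y) < k (-x)" using aut_less[OF assms] by simp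
    then show "mir k x < mir k y" by (simp add: mir_def)
  qed
  moreover have "surj (mir k)"
  proof (rule surjI)
    fix y show "mir k (- inv k (- y)) = y" by (simp add: mir_def aut_f_inv[OF assms])
  qed
  ultimately show ?thesis by (rule smono_surj_aut)
qed

lemma inv_mir: assumes "aut k" shows "inv (mir k) = mir (inv k)"
proof
  fix y
  have "mir k (mir (inv k) y) = y" by (simp add: mir_def aut_f_inv[OF assms])
  then show "inv (mir k) y = mir (inv k) y" using aut_inv_f[OF aut_mir[OF assms]] by metis
qed

lemma ipow_mir: assumes k: "aut k" shows "ipow (mir k) m x = - ipow k m (- x)"
proof (induction m rule: int_induct[where k=0])
  case base then show ?case by simp
next
  case (step1 i)
  have "ipow (mir k) (i+1) x = mir k (ipow (mir k) i x)" by (rule ipow_succ[OF aut_mir[OF k]])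
  also have "\<dots> = - k (ipow k i (- x))" using step1(2) by (simp add: mir_def)
  also have "\<dots> = - ipow k (i+1) (- x)" by (simp add: ipow_succ[OF k])
  finally show ?case .
next
  case (step2 i)
  have "ipow (mir k) (i-1) x = inv (mir k) (ipow (mir k) i x)" by (rule ipow_pred[OF aut_mir[OF k]])
  also have "\<dots> = inv (mir k) (- ipow k i (- x))" using step2(2) by simp
  also have "\<dots> = mir (inv k) (- ipow k i (- x))" by (simp add: inv_mir[OF k])
  also have "\<dots> = - inv k (ipow k i (- x))" by (simp add: mir_def)
  also have "\<dots> = - ipow k (i-1) (- x)" by (simp add: ipow_pred[OF k])
  finally show ?case .
qed

lemma orb_rel_mir: assumes k: "aut k" shows "orb_rel (mir k) a b \<longleftrightarrow> orb_rel k (-a) (-b)"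
proof
  assume "orb_rel (mir k) a b"
  then obtain m n where "ipow (mir k) m a \<le> b" "b \<le> ipow (mir k) n a" unfolding orb_rel_def by blast
  then have "ipow k n (-a) \<le> -b" "-b \<le> ipow k m (-a)" unfolding ipow_mir[OF k] by simp_all
  then show "orb_rel k (-a) (-b)" unfolding orb_rel_def by blast
next
  assume "orb_rel k (-a) (-b)"
  then obtain m n where "ipow k m (-a) \<le> -b" "-b \<le> ipow k n (-a)" unfolding orb_rel_def by blast
  then have "ipow (mir k) n a \<le> b" "b \<le> ipow (mir k) m a" unfolding ipow_mir[OF k] by simp_all
  then show "orb_rel (mir k) a b" unfolding orb_rel_def by blast
qed

lemma orbital_mir: assumes k: "aut k" shows "orbital_of (mir k) a = uminus ` orbital_of k (-a)"
proof
  show "orbital_of (mir k) a \<subseteq> uminus ` orbital_of k (-a)"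
  proof
    fix b assume "b \<in> orbital_of (mir k) a"
    then have "-b \<in> orbital_of k (-a)" unfolding orbital_mem orb_rel_mir[OF k] .
    then show "b \<in> uminus ` orbital_of k (-a)" by (metis image_eqI minus_minus)
  qed
next
  show "uminus ` orbital_of k (-a) \<subseteq> orbital_of (mir k) a"
  proof
    fix b assume "b \<in> uminus ` orbital_of k (-a)"
    then obtain b' where "b = - b'" "b' \<in> orbital_of k (-a)" by blast
    then show "b \<in> orbital_of (mir k) a" unfolding orbital_mem orb_rel_mir[OF k] by simp
  qed
qed

lemma two_neg: "(\<exists>x\<in>uminus ` D. \<exists>y\<in>uminus ` D. x \<noteq> y) \<longleftrightarrow> (\<exists>x\<in>D. \<exists>y\<in>D. x \<noteq> (y::rat))"
  by auto

lemma nontriv_mir: assumes k: "aut k" shows "nontriv_orbitals (mir k) = (\<lambda>D. uminus ` D) ` nontriv_orbitals k"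
proof
  show "nontriv_orbitals (mir k) \<subseteq> (\<lambda>D. uminus ` D) ` nontriv_orbitals k"
  proof
    fix D assume D: "D \<in> nontriv_orbitals (mir k)"
    obtain a where a: "D = orbital_of (mir k) a" using D unfolding nontriv_mem by blast
    have two: "\<exists>x\<in>D. \<exists>y\<in>D. x \<noteq> y" using D unfolding nontriv_mem by blast
    have Da: "D = uminus ` orbital_of k (-a)" using a orbital_mir[OF k] by simp
    then have "orbital_of k (-a) \<in> nontriv_orbitals k" using two two_neg unfolding nontriv_mem by metis
    then show "D \<in> (\<lambda>D. uminus ` D) ` nontriv_orbitals k" using Da by blast
  qed
next
  show "(\<lambda>D. uminus ` D) ` nontriv_orbitals k \<subseteq> nontriv_orbitals (mir k)"
  proof
    fix D assume "D \<in> (\<lambda>D. uminus ` D) ` nontriv_orbitals k"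
    then obtain E where E: "E \<in> nontriv_orbitals k" "D = uminus ` E" by blast
    obtain a where a: "E = orbital_of k a" using E(1) unfolding nontriv_mem by blast
    have two: "\<exists>x\<in>E. \<exists>y\<in>E. x \<noteq> y" using E(1) unfolding nontriv_mem by blast
    have "D = orbital_of (mir k) (-a)" using E(2) a orbital_mir[OF k, of "-a"] by simp
    moreover have "\<exists>x\<in>D. \<exists>y\<in>D. x \<noteq> y" using two two_neg E(2) by metis
    ultimately show "D \<in> nontriv_orbitals (mir k)" unfolding nontriv_mem by blast
  qed
qed

lemma supp_mir: "x \<in> supp (mir k) \<longleftrightarrow> - x \<in> supp k"
  by (auto simp: supp_def mir_def)

lemma restr_mir: "restriction_of a b \<Longrightarrow> restriction_of (mir a) (mir b)"
  unfolding restriction_of_def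
proof (intro conjI subsetI ballI)
  assume h: "supp a \<subseteq> supp b \<and> (\<forall>x\<in>supp a. a x = b x)"
  fix x assume "x \<in> supp (mir a)"
  then have "-x \<in> supp a" by (simp add: supp_mir)
  then show "x \<in> supp (mir b)" "mir a x = mir b x" using h supp_mir[of x b] by (auto simp: mir_def)
qed

lemma bump_mir: assumes "bump a" shows "bump (mir a)"
proof -
  have a: "aut a" using assms bump_def by blast
  have "a \<noteq> id" using assms bump_def by blast
  then have ne: "mir a \<noteq> id" by (metis mir_mir mir_id)
  obtain C0 where "C0 \<in> nontriv_orbitals a" "\<forall>D. D \<in> nontriv_orbitals a \<longrightarrow> D = C0"
    using assms unfolding bump_def by metis
  then have "nontriv_orbitals a = {C0}" by blast
  then have "nontriv_orbitals (mir a) = {uminus ` C0}" using nontriv_mir[OF a] by simp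
  then have "\<exists>!C. C \<in> nontriv_orbitals (mir a)" by simp
  then show ?thesis unfolding bump_def using aut_mir[OF a] ne by blast
qed

lemma orbelt_mir: "orbital_elt_of a b \<Longrightarrow> orbital_elt_of (mir a) (mir b)"
  unfolding orbital_elt_of_def
proof (intro conjI subsetI ballI)
  assume h: "bump a \<and> supp a \<subseteq> supp b \<and> (\<forall>x\<in>supp a. a x = b x)"
  then show "bump (mir a)" using bump_mir by blast
  fix x assume "x \<in> supp (mir a)"
  then have "-x \<in> supp a" by (simp add: supp_mir)
  then show "x \<in> supp (mir b)" "mir a x = mir b x" using h supp_mir[of x b] by (auto simp: mir_def)
qed

lemma Pf_mir: assumes "Pf f" shows "Pf (mir f)"
proof -
  obtain g g1 g2 h where H: "aut g" "aut g1" "aut g2" "restriction_of g f" "orbital_elt_of g1 g"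
    "g = g1 \<circ> g2" "aut h" "g2 = h \<circ> g \<circ> inv h" using assms unfolding Pf_def by blast
  have "mir g2 = mir h \<circ> mir g \<circ> inv (mir h)" using H(8) inv_mir[OF H(7)] by (simp add: mir_comp)
  moreover have "mir g = mir g1 \<circ> mir g2" using H(6) by (simp add: mir_comp)
  ultimately show ?thesis unfolding Pf_def
    using aut_mir[OF H(1)] aut_mir[OF H(2)] aut_mir[OF H(3)] restr_mir[OF H(4)] orbelt_mir[OF H(5)] aut_mir[OF H(7)]
    by blast
qed

lemma omega_dec:
  assumes f: "aut f" and Os: "\<And>n. Os n \<in> nontriv_orbitals f" and dec: "\<And>n. setlt (Os (Suc n)) (Os n)"
  shows "Pf f"
proof -
  define Os' where "Os' = (\<lambda>n. uminus ` Os n)"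
  have "Os' n \<in> nontriv_orbitals (mir f)" for n unfolding Os'_def nontriv_mir[OF f] using Os by blast
  moreover have "setlt (Os' n) (Os' (Suc n))" for n using dec[of n] unfolding setlt_def Os'_def by auto
  ultimately have "Pf (mir f)" by (rule omega_main[OF aut_mir[OF f]])
  then have "Pf (mir (mir f))" by (rule Pf_mir)
  then show ?thesis by simp
qed


section \<open>Conjugation\<close>

lemma conj_ipow0: assumes g: "aut g" and h: "aut h" and kd: "k = h \<circ> g \<circ> inv h"
  shows "ipow k m x = h (ipow g m (inv h x))"
proof -
  have k: "aut k" unfolding kd using aut_comp[OF aut_comp[OF h g] aut_inv[OF h]] .
  have kh: "k (h z) = h (g z)" for z unfolding kd by (simp add: aut_inv_f[OF h])
  have ik: "inv k (h z) = h (inv g z)" for z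
  proof -
    have "k (h (inv g z)) = h z" using kh aut_f_inv[OF g] by simp
    then show ?thesis using aut_inv_f[OF k] by metis
  qed
  show ?thesis
  proof (induction m rule: int_induct[where k=0])
    case base then show ?case by (simp add: aut_f_inv[OF h])
  next
    case (step1 i)
    have "ipow k (i+1) x = k (ipow k i x)" by (rule ipow_succ[OF k])
    also have "\<dots> = k (h (ipow g i (inv h x)))" by (simp only: step1(2))
    also have "\<dots> = h (ipow g (i+1) (inv h x))" by (simp add: kh ipow_succ[OF g])
    finally show ?case .
  next
    case (step2 i)
    have "ipow k (i-1) x = inv k (ipow k i x)" by (rule ipow_pred[OF k])
    also have "\<dots> = inv k (h (ipow g i (inv h x)))" by (simp only: step2(2))
    also have "\<dots> = h (ipow g (i-1) (inv h x))" by (simp add: ik ipow_pred[OF g])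
    finally show ?case .
  qed
qed

lemma conj_ipow: assumes g: "aut g" and h: "aut h"
  shows "ipow (h \<circ> g \<circ> inv h) m x = h (ipow g m (inv h x))"
  by (rule conj_ipow0[OF g h refl])

lemma conj_orb_rel: assumes g: "aut g" and h: "aut h"
  shows "orb_rel (h \<circ> g \<circ> inv h) a b \<longleftrightarrow> orb_rel g (inv h a) (inv h b)"
proof -
  have e: "h u \<le> b \<longleftrightarrow> u \<le> inv h b" "b \<le> h u \<longleftrightarrow> inv h b \<le> u" for u
    using aut_le[OF h, of u "inv h b"] aut_le[OF h, of "inv h b" u] aut_f_inv[OF h, of b] by simp_all
  show ?thesis unfolding orb_rel_def conj_ipow[OF g h] e by blast
qed

lemma conj_orbital: assumes g: "aut g" and h: "aut h"
  shows "orbital_of (h \<circ> g \<circ> inv h) a = h ` orbital_of g (inv h a)"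
proof
  show "orbital_of (h \<circ> g \<circ> inv h) a \<subseteq> h ` orbital_of g (inv h a)"
  proof
    fix b assume "b \<in> orbital_of (h \<circ> g \<circ> inv h) a"
    then have "inv h b \<in> orbital_of g (inv h a)" unfolding orbital_mem conj_orb_rel[OF g h] .
    moreover have "b = h (inv h b)" using aut_f_inv[OF h] by simp
    ultimately show "b \<in> h ` orbital_of g (inv h a)" by blast
  qed
next
  show "h ` orbital_of g (inv h a) \<subseteq> orbital_of (h \<circ> g \<circ> inv h) a"
  proof
    fix b assume "b \<in> h ` orbital_of g (inv h a)"
    then obtain b' where "b = h b'" "b' \<in> orbital_of g (inv h a)" by blast
    then show "b \<in> orbital_of (h \<circ> g \<circ> inv h) a" unfolding orbital_mem conj_orb_rel[OF g h]
      using aut_inv_f[OF h] by simp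
  qed
qed

lemma two_img: assumes "inj h" shows "(\<exists>x\<in>h ` D. \<exists>y\<in>h ` D. x \<noteq> y) \<longleftrightarrow> (\<exists>x\<in>D. \<exists>y\<in>D. x \<noteq> (y::rat))"
proof
  assume "\<exists>x\<in>h ` D. \<exists>y\<in>h ` D. x \<noteq> y"
  then obtain x y where xy: "x \<in> D" "y \<in> D" "h x \<noteq> h y" by blast
  then have "x \<noteq> y" by auto
  then show "\<exists>x\<in>D. \<exists>y\<in>D. x \<noteq> y" using xy by blast
next
  assume "\<exists>x\<in>D. \<exists>y\<in>D. x \<noteq> y"
  then obtain x y where "x \<in> D" "y \<in> D" "x \<noteq> y" by blast
  then have "h x \<noteq> h y" using assms injD by metis
  then show "\<exists>x\<in>h ` D. \<exists>y\<in>h ` D. x \<noteq> y" using \<open>x \<in> D\<close> \<open>y \<in> D\<close> by blast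
qed

lemma conj_nontriv: assumes g: "aut g" and h: "aut h"
  shows "nontriv_orbitals (h \<circ> g \<circ> inv h) = (\<lambda>D. h ` D) ` nontriv_orbitals g"
proof -
  have ih: "inj h" using h aut_bij bij_is_inj by blast
  show ?thesis
  proof
    show "nontriv_orbitals (h \<circ> g \<circ> inv h) \<subseteq> (\<lambda>D. h ` D) ` nontriv_orbitals g"
    proof
      fix D assume D: "D \<in> nontriv_orbitals (h \<circ> g \<circ> inv h)"
      obtain a where a: "D = orbital_of (h \<circ> g \<circ> inv h) a" using D unfolding nontriv_mem by blast
      have two: "\<exists>x\<in>D. \<exists>y\<in>D. x \<noteq> y" using D unfolding nontriv_mem by blast
      have Da: "D = h ` orbital_of g (inv h a)" using a conj_orbital[OF g h] by simp
      then have "orbital_of g (inv h a) \<in> nontriv_orbitals g" using two two_img[OF ih] unfolding nontriv_mem by metis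
      then show "D \<in> (\<lambda>D. h ` D) ` nontriv_orbitals g" using Da by blast
    qed
  next
    show "(\<lambda>D. h ` D) ` nontriv_orbitals g \<subseteq> nontriv_orbitals (h \<circ> g \<circ> inv h)"
    proof
      fix D assume "D \<in> (\<lambda>D. h ` D) ` nontriv_orbitals g"
      then obtain E where E: "E \<in> nontriv_orbitals g" "D = h ` E" by blast
      obtain a where a: "E = orbital_of g a" using E(1) unfolding nontriv_mem by blast
      have two: "\<exists>x\<in>E. \<exists>y\<in>E. x \<noteq> y" using E(1) unfolding nontriv_mem by blast
      have "D = orbital_of (h \<circ> g \<circ> inv h) (h a)" using E(2) a conj_orbital[OF g h, of "h a"] aut_inv_f[OF h] by simp
      moreover have "\<exists>x\<in>D. \<exists>y\<in>D. x \<noteq> y" using two two_img[OF ih] E(2) by metis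
      ultimately show "D \<in> nontriv_orbitals (h \<circ> g \<circ> inv h)" unfolding nontriv_mem by blast
    qed
  qed
qed

section \<open>Restrictions have fewer orbitals\<close>

lemma restr_nontriv_sub: assumes f: "aut f" and g: "aut g" and r: "restriction_of g f"
  shows "nontriv_orbitals g \<subseteq> nontriv_orbitals f"
proof
  define V where "V = supp g"
  have gV: "g x \<in> V" if "x \<in> V" for x
  proof -
    have "g x \<noteq> x" using that by (simp add: V_def supp_def)
    then have "g (g x) \<noteq> g x" using aut_eq[OF g] by simp
    then show ?thesis by (simp add: V_def supp_def)
  qed
  have igV: "inv g x \<in> V" if "x \<in> V" for x
  proof -
    have "g x \<noteq> x" using that by (simp add: V_def supp_def)
    then have "g (inv g x) \<noteq> inv g x" using aut_f_inv[OF g] by metis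
    then show ?thesis by (simp add: V_def supp_def)
  qed
  have gf: "g x = f x" if "x \<in> V" for x using r that unfolding restriction_of_def V_def by blast
  have igf: "inv g x = inv f x" if "x \<in> V" for x
  proof -
    have "f (inv g x) = x" using gf[OF igV[OF that]] aut_f_inv[OF g] by simp
    then show ?thesis using aut_inv_f[OF f] by metis
  qed
  have ip: "ipow g m a = ipow f m a \<and> ipow g m a \<in> V" if a: "a \<in> V" for a m
  proof (induction m rule: int_induct[where k=0])
    case base then show ?case using a by simp
  next
    case (step1 i)
    then show ?case using gV gf ipow_succ[OF g] ipow_succ[OF f] by metis
  next
    case (step2 i)
    then show ?case using igV igf ipow_pred[OF g] ipow_pred[OF f] by metis
  qed
  fix D assume D: "D \<in> nontriv_orbitals g"
  obtain a where a: "D = orbital_of g a" using D unfolding nontriv_mem by blast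
  have two: "\<exists>x\<in>D. \<exists>y\<in>D. x \<noteq> y" using D unfolding nontriv_mem by blast
  have "g a \<noteq> a"
  proof
    assume "g a = a" then have "D = {a}" using a orbital_fix[OF g] by simp
    then show False using two by blast
  qed
  then have "a \<in> V" by (simp add: V_def supp_def)
  then have "orbital_of g a = orbital_of f a" unfolding orbital_of_def orb_rel_def using ip by simp
  then show "D \<in> nontriv_orbitals f" using a two unfolding nontriv_mem by blast
qed

lemma forward:
  assumes f: "aut f" and P: "Pf f" shows "infinite (nontriv_orbitals f)"
proof
  assume fin: "finite (nontriv_orbitals f)"
  obtain g g1 g2 h where H: "aut g" "aut g1" "aut g2" "restriction_of g f" "orbital_elt_of g1 g"
    "g = g1 \<circ> g2" "aut h" "g2 = h \<circ> g \<circ> inv h" using P unfolding Pf_def by blast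
  have sub1: "nontriv_orbitals g \<subseteq> nontriv_orbitals f" by (rule restr_nontriv_sub[OF f H(1) H(4)])
  then have fing: "finite (nontriv_orbitals g)" using fin finite_subset by blast
  define V1 where "V1 = supp g1"
  have b1: "bump g1" and V1g: "\<forall>x\<in>V1. g1 x = g x" using H(5) unfolding orbital_elt_of_def V1_def by blast+
  have g2e: "g2 x = inv g1 (g x)" for x using H(6) aut_inv_f[OF H(2)] by simp
  have igV1: "inv g1 x \<in> V1" if "x \<in> V1" for x
  proof -
    have "g1 x \<noteq> x" using that by (simp add: V1_def supp_def)
    then have "g1 (inv g1 x) \<noteq> inv g1 x" using aut_f_inv[OF H(2)] by metis
    then show ?thesis by (simp add: V1_def supp_def)
  qed
  have g2in: "g2 x = x" if "x \<in> V1" for x using g2e V1g that aut_inv_f[OF H(2)] by metis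
  have g2out: "g2 x = g x" if x: "x \<notin> V1" for x
  proof -
    have "g x \<notin> V1"
    proof
      assume gx: "g x \<in> V1"
      define z where "z = inv g1 (g x)"
      have z: "z \<in> V1" using igV1[OF gx] z_def by simp
      have "g z = g1 z" using V1g z by simp
      also have "\<dots> = g x" using aut_f_inv[OF H(2)] z_def by simp
      finally have "z = x" using aut_eq[OF H(1)] by simp
      then show False using z x by simp
    qed
    then have "g1 (g x) = g x" by (simp add: V1_def supp_def)
    then have "inv g1 (g x) = g x" using aut_inv_f[OF H(2)] by metis
    then show ?thesis using g2e by simp
  qed
  have r2: "restriction_of g2 g" unfolding restriction_of_def
  proof (intro conjI subsetI ballI)
    fix x assume "x \<in> supp g2"
    then have x: "g2 x \<noteq> x" by (simp add: supp_def)
    then have "x \<notin> V1" using g2in by blast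
    then show "x \<in> supp g" "g2 x = g x" using x g2out by (simp_all add: supp_def)
  qed
  have sub2: "nontriv_orbitals g2 \<subseteq> nontriv_orbitals g" by (rule restr_nontriv_sub[OF H(1) H(3) r2])
  have "g1 \<noteq> id" using b1 bump_def by blast
  then obtain a where "g1 a \<noteq> a" by (metis eq_id_iff)
  then have aV: "a \<in> V1" by (simp add: V1_def supp_def)
  then have "g a \<noteq> a" using V1g \<open>g1 a \<noteq> a\<close> by simp
  then have E: "orbital_of g a \<in> nontriv_orbitals g" by (rule nontriv_of_moved[OF H(1)])
  have "orbital_of g a \<notin> nontriv_orbitals g2"
  proof
    assume "orbital_of g a \<in> nontriv_orbitals g2"
    then have "g2 a \<noteq> a" using nontriv_moved[OF H(3) _ orbital_self] by blast
    then show False using g2in[OF aV] by simp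
  qed
  then have ps: "nontriv_orbitals g2 \<subset> nontriv_orbitals g" using sub2 E by blast
  have "card (nontriv_orbitals g2) < card (nontriv_orbitals g)" by (rule psubset_card_mono[OF fing ps])
  moreover have "card (nontriv_orbitals g2) = card (nontriv_orbitals g)"
  proof -
    have "inj h" using H(7) aut_bij bij_is_inj by blast
    then have "inj (\<lambda>D. h ` D)" by (simp add: inj_def inj_image_eq_iff)
    then have "card ((\<lambda>D. h ` D) ` nontriv_orbitals g) = card (nontriv_orbitals g)"
      by (simp add: card_image inj_on_subset)
    then show ?thesis using conj_nontriv[OF H(1) H(7)] H(8) by simp
  qed
  ultimately show False by simp
qed


lemma setlt_of_pt:
  assumes f: "aut f" and D: "D \<in> nontriv_orbitals f" and E: "E \<in> nontriv_orbitals f" and DE: "D \<noteq> E"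
    and x: "x \<in> D" and y: "y \<in> E" and xy: "x < y"
  shows "setlt D E"
  unfolding setlt_def
proof (intro ballI)
  fix x' y' assume x': "x' \<in> D" and y': "y' \<in> E"
  show "x' < y'"
  proof (rule ccontr)
    assume "\<not> x' < y'"
    then have yx: "y' \<le> x'" by simp
    show False
    proof (cases "y \<le> x'")
      case True
      then have "y \<in> D" using nontriv_convex[OF f D x x'] xy by simp
      then show False using nontriv_disj[OF f D E _ y] DE by blast
    next
      case False
      then have "x' \<in> E" using nontriv_convex[OF f E y' y yx] by simp
      then show False using nontriv_disj[OF f D E x'] DE by blast
    qed
  qed
qed

lemma orb_linear:
  assumes f: "aut f" and D: "D \<in> nontriv_orbitals f" and E: "E \<in> nontriv_orbitals f" and DE: "D \<noteq> E"
  shows "setlt D E \<or> setlt E D"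
proof -
  obtain x where x: "x \<in> D" using D unfolding nontriv_mem by blast
  obtain y where y: "y \<in> E" using E unfolding nontriv_mem by blast
  have "x \<noteq> y" using nontriv_disj[OF f D E x] y DE by blast
  then consider "x < y" | "y < x" by linarith
  then show ?thesis
  proof cases
    case 1 then show ?thesis using setlt_of_pt[OF f D E DE x y] by blast
  next
    case 2 then show ?thesis using setlt_of_pt[OF f E D _ y x] DE by blast
  qed
qed

lemma backward:
  assumes f: "aut f" and inf: "infinite (nontriv_orbitals f)" shows "Pf f"
proof (cases "\<exists>X. X \<subseteq> nontriv_orbitals f \<and> X \<noteq> {} \<and> (\<forall>D\<in>X. \<exists>E\<in>X. setlt D E)")
  case True
  then obtain X where X: "X \<subseteq> nontriv_orbitals f" "X \<noteq> {}" "\<forall>D\<in>X. \<exists>E\<in>X. setlt D E" by blast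
  define nx where "nx = (\<lambda>D. SOME E. E \<in> X \<and> setlt D E)"
  have nx: "nx D \<in> X \<and> setlt D (nx D)" if "D \<in> X" for D
    unfolding nx_def by (rule someI_ex) (use X(3) that in blast)
  define D0 where "D0 = (SOME D. D \<in> X)"
  have D0: "D0 \<in> X" unfolding D0_def using X(2) by (simp add: some_in_eq)
  define Os where "Os = rec_nat D0 (\<lambda>n D. nx D)"
  have Os0: "Os 0 = D0" and OsS: "Os (Suc n) = nx (Os n)" for n by (simp_all add: Os_def)
  have OsX: "Os n \<in> X" for n by (induction n) (simp_all add: Os0 OsS D0 nx)
  show ?thesis
  proof (rule omega_main[OF f])
    show "Os n \<in> nontriv_orbitals f" for n using OsX X(1) by blast
    show "setlt (Os n) (Os (Suc n))" for n using nx[OF OsX[of n]] OsS by simp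
  qed
next
  case False
  define S where "S = nontriv_orbitals f"
  have mx: "\<exists>D\<in>X. \<forall>E\<in>X. E \<noteq> D \<longrightarrow> setlt E D" if X: "X \<subseteq> S" "X \<noteq> {}" for X
  proof -
    have "X \<subseteq> nontriv_orbitals f" using X(1) S_def by simp
    then have "\<not> (\<forall>D\<in>X. \<exists>E\<in>X. setlt D E)" using False X(2) by blast
    then obtain D where D: "D \<in> X" "\<forall>E\<in>X. \<not> setlt D E" by blast
    have "\<forall>E\<in>X. E \<noteq> D \<longrightarrow> setlt E D"
    proof (intro ballI impI)
      fix E assume "E \<in> X" "E \<noteq> D"
      moreover have "E \<in> nontriv_orbitals f" "D \<in> nontriv_orbitals f" using \<open>E \<in> X\<close> D(1) X(1) S_def by auto
      ultimately have "setlt D E \<or> setlt E D" using orb_linear[OF f, of D E] by simp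
      then show "setlt E D" using D(2) \<open>E \<in> X\<close> by blast
    qed
    then show ?thesis using D by blast
  qed
  define mxf where "mxf = (\<lambda>X. SOME D. D \<in> X \<and> (\<forall>E\<in>X. E \<noteq> D \<longrightarrow> setlt E D))"
  have mxf: "mxf X \<in> X \<and> (\<forall>E\<in>X. E \<noteq> mxf X \<longrightarrow> setlt E (mxf X))" if "X \<subseteq> S" "X \<noteq> {}" for X
    unfolding mxf_def by (rule someI_ex) (use mx[OF that] in blast)
  define Y where "Y = rec_nat S (\<lambda>n X. X - {mxf X})"
  have Y0: "Y 0 = S" and YS: "Y (Suc n) = Y n - {mxf (Y n)}" for n by (simp_all add: Y_def)
  have Yinf: "infinite (Y n) \<and> Y n \<subseteq> S" for n
  proof (induction n)
    case 0 then show ?case using inf Y0 S_def by simp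
  next
    case (Suc n) then show ?case using YS by auto
  qed
  have Yne: "Y n \<noteq> {}" for n using Yinf[of n] by auto
  define Os where "Os = (\<lambda>n. mxf (Y n))"
  show ?thesis
  proof (rule omega_dec[OF f])
    show "Os n \<in> nontriv_orbitals f" for n using mxf[of "Y n"] Yinf[of n] Yne[of n] unfolding Os_def S_def by blast
    show "setlt (Os (Suc n)) (Os n)" for n
    proof -
      have m1: "Os (Suc n) \<in> Y (Suc n)" using mxf[of "Y (Suc n)"] Yinf Yne unfolding Os_def by blast
      then have "Os (Suc n) \<in> Y n" "Os (Suc n) \<noteq> Os n" using YS unfolding Os_def by auto
      then show ?thesis using mxf[of "Y n"] Yinf Yne unfolding Os_def by blast
    qed
  qed
qed

theorem lemma2p2:
  fixes f :: "rat \<Rightarrow> rat"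
  assumes "aut f"
  shows "(\<exists>g g1 g2. aut g \<and> aut g1 \<and> aut g2 \<and>
            restriction_of g f \<and> orbital_elt_of g1 g \<and> g = g1 \<circ> g2 \<and>
            (\<exists>h. aut h \<and> g2 = h \<circ> g \<circ> inv h))
         \<longleftrightarrow> infinite (nontriv_orbitals f)"
proof
  assume "\<exists>g g1 g2. aut g \<and> aut g1 \<and> aut g2 \<and>
            restriction_of g f \<and> orbital_elt_of g1 g \<and> g = g1 \<circ> g2 \<and>
            (\<exists>h. aut h \<and> g2 = h \<circ> g \<circ> inv h)"
  then have "Pf f" unfolding Pf_def .
  then show "infinite (nontriv_orbitals f)" by (rule forward[OF assms])
next
  assume "infinite (nontriv_orbitals f)"
  then have "Pf f" by (rule backward[OF assms])
  then show "\<exists>g g1 g2. aut g \<and> aut g1 \<and> aut g2 \<and>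
            restriction_of g f \<and> orbital_elt_of g1 g \<and> g = g1 \<circ> g2 \<and>
            (\<exists>h. aut h \<and> g2 = h \<circ> g \<circ> inv h)" unfolding Pf_def .
qed


end
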